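(* Fix $k\ge0$. Let $\Omega\subset\mathbb{R}^d$ be compact with $[-r,r]^d\subseteq\Omega$ for some $r>0$, and let $\mathbf{z}=(z_\alpha)_{\|\alpha\|_1\le k}\in\mathbb{R}^{\binom{k+d}{d}}$ be arbitrary. Then the problem $$\inf_{\mu\in\mathcal{M}(\Omega)}\|\mu\|_{\mathrm{TV}}\quad\text{subject to}\quad\int_\Omega x^\alpha\,d\mu(x)=z_\alpha\ \text{ for all }\|\alpha\|_1\le k$$ has a solution, and every solution $\mu^*$ satisfies $\|\mu^*\|_{\mathrm{TV}}\le e^{2dk/r}\|\mathbf{z}\|_\infty$.
   Context: $\mathcal{M}(\Omega)$: signed Radon measures on $\Omega$ with finite total variation, $\|\cdot\|_{\mathrm{TV}}$ the total variation norm. Multi-index notation $x^\alpha=x_1^{\alpha_1}\cdots x_d^{\alpha_d}$, $\|\alpha\|_1=\sum_i\alpha_i$; $\|\mathbf{z}\|_\infty=\max_\alpha|z_\alpha|$. *)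

theory Defs
  imports "HOL-Analysis.Analysis"
begin

text \<open>Points of R^d are vectors real^'d (d = CARD('d)). Multi-indices are
functions 'd \<Rightarrow> nat; |alpha|_1 = sum over coordinates.\<close>

definition multi_indices :: "nat \<Rightarrow> ('d::finite \<Rightarrow> nat) set" where
  "multi_indices k = {\<alpha>. (\<Sum>i\<in>UNIV. \<alpha> i) \<le> k}"

definition monomial :: "('d::finite \<Rightarrow> nat) \<Rightarrow> real^'d \<Rightarrow> real" where
  "monomial \<alpha> x = (\<Prod>i\<in>UNIV. (x $ i) ^ (\<alpha> i))"

text \<open>A finite signed (Radon) measure on the compact set Omega, represented by its
Jordan decomposition: a pair of mutually singular finite Borel measures on Omega.\<close>

definition signed_measure_on ::
  "(real^'d::finite) set \<Rightarrow> (real^'d) measure \<times> (real^'d) measure \<Rightarrow> bool" where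
  "signed_measure_on \<Omega> \<mu> \<longleftrightarrow>
     sets (fst \<mu>) = sets (restrict_space borel \<Omega>) \<and>
     sets (snd \<mu>) = sets (restrict_space borel \<Omega>) \<and>
     finite_measure (fst \<mu>) \<and> finite_measure (snd \<mu>) \<and>
     (\<exists>P \<in> sets (restrict_space borel \<Omega>).
        emeasure (fst \<mu>) (\<Omega> - P) = 0 \<and> emeasure (snd \<mu>) P = 0)"

definition tv_norm :: "(real^'d::finite) set \<Rightarrow> (real^'d) measure \<times> (real^'d) measure \<Rightarrow> real" where
  "tv_norm \<Omega> \<mu> = measure (fst \<mu>) \<Omega> + measure (snd \<mu>) \<Omega>"

definition signed_integral ::
  "(real^'d::finite) measure \<times> (real^'d) measure \<Rightarrow> (real^'d \<Rightarrow> real) \<Rightarrow> real" where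
  "signed_integral \<mu> f = (\<integral>x. f x \<partial>(fst \<mu>)) - (\<integral>x. f x \<partial>(snd \<mu>))"

definition moment_sup_norm :: "nat \<Rightarrow> (('d::finite \<Rightarrow> nat) \<Rightarrow> real) \<Rightarrow> real" where
  "moment_sup_norm k z = Max ((\<lambda>\<alpha>. \<bar>z \<alpha>\<bar>) ` multi_indices k)"

end

theory Submission
  imports Defs "HOL-Computational_Algebra.Polynomial"
begin

fun cheb :: "nat \<Rightarrow> real poly" where
  "cheb 0 = 1"
| "cheb (Suc 0) = [:0, 1:]"
| "cheb (Suc (Suc n)) = [:0, 2:] * cheb (Suc n) - cheb n"

lemma cheb_cos: "poly (cheb n) (cos t) = cos (real n * t)"
proof (induction n rule: cheb.induct)
  case 1 then show ?case by simp
next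
  case 2 then show ?case by simp
next
  case (3 n)
  have "cos (real (Suc (Suc n)) * t) = 2 * cos t * cos (real (Suc n) * t) - cos (real n * t)"
  proof -
    have a: "real (Suc (Suc n)) * t = real (Suc n) * t + t" by (simp add: algebra_simps)
    have b: "real n * t = real (Suc n) * t - t" by (simp add: algebra_simps)
    show ?thesis unfolding a b cos_add cos_diff by (simp add: algebra_simps)
  qed
  then show ?case using 3 by simp
qed

lemma degree_cheb: "degree (cheb n) \<le> n"
proof (induction n rule: cheb.induct)
  case (3 n)
  have "degree ([:0, 2:] * cheb (Suc n)) \<le> Suc (Suc n)"
    using degree_mult_le[of "[:0,2:]" "cheb (Suc n)"] 3(1) by simp
  moreover have "degree (cheb n) \<le> Suc (Suc n)" using 3(2) by simp
  ultimately show ?case by (simp add: degree_diff_le)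
qed (auto)

lemma coeff_cheb_SS: "coeff (cheb (Suc (Suc n))) j =
   (if j = 0 then 0 else 2 * coeff (cheb (Suc n)) (j - 1)) - coeff (cheb n) j"
  by (cases j) (simp_all add: coeff_pCons)

lemma coeff_cheb_0: "coeff (cheb (Suc (Suc n))) 0 = - coeff (cheb n) 0"
  by (simp add: coeff_cheb_SS)

lemma coeff_cheb_Suc: "coeff (cheb (Suc (Suc n))) (Suc j) = 2 * coeff (cheb (Suc n)) j - coeff (cheb n) (Suc j)"
  by (simp add: coeff_cheb_SS)

lemma cheb_sign:
  "(odd (n + j) \<longrightarrow> coeff (cheb n) j = 0) \<and> (-1) ^ ((n - j) div 2) * coeff (cheb n) j \<ge> 0"
proof (induction n arbitrary: j rule: cheb.induct)
  case 1 then show ?case by (cases j) auto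
next
  case 2 then show ?case by (cases j) (auto simp: coeff_pCons split: nat.splits)
next
  case (3 n)
  show ?case
  proof (cases j)
    case 0
    have e: "(Suc (Suc n) - 0) div 2 = Suc (n div 2)" by simp
    show ?thesis using 3(2)[of 0] unfolding 0 coeff_cheb_0 e by simp
  next
    case (Suc i)
    have A: "odd (Suc (Suc n) + Suc i) \<Longrightarrow> coeff (cheb (Suc n)) i = 0 \<and> coeff (cheb n) (Suc i) = 0"
      using 3(1)[of i] 3(2)[of "Suc i"] by simp
    have B: "(-1) ^ ((Suc n - i) div 2) * coeff (cheb (Suc n)) i \<ge> 0" using 3(1)[of i] by simp
    have C: "(-1) ^ ((n - Suc i) div 2) * coeff (cheb n) (Suc i) \<ge> 0" using 3(2)[of "Suc i"] by simp
    show ?thesis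
    proof (cases "Suc i \<le> n")
      case True
      have e1: "(Suc (Suc n) - Suc i) div 2 = (Suc n - i) div 2" by simp
      have e2: "(Suc n - i) div 2 = Suc ((n - Suc i) div 2)" using True by (simp add: Suc_diff_le)
      have C': "(-1) ^ ((Suc n - i) div 2) * coeff (cheb n) (Suc i) \<le> 0"
        using C unfolding e2 by simp
      show ?thesis unfolding Suc coeff_cheb_Suc e1 using A B C' by (auto simp: algebra_simps)
    next
      case False
      have z: "coeff (cheb n) (Suc i) = 0"
        using degree_cheb[of n] False by (intro coeff_eq_0) simp
      have e1: "(Suc (Suc n) - Suc i) div 2 = (Suc n - i) div 2" by simp
      show ?thesis unfolding Suc coeff_cheb_Suc e1 z using A B by (auto simp: mult.commute)
    qed
  qed
qed

fun chabs :: "nat \<Rightarrow> real poly" where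
  "chabs 0 = 1"
| "chabs (Suc 0) = [:0, 1:]"
| "chabs (Suc (Suc n)) = [:0, 2:] * chabs (Suc n) + chabs n"

lemma coeff_chabs: "coeff (chabs n) j = \<bar>coeff (cheb n) j\<bar>"
proof (induction n arbitrary: j rule: cheb.induct)
  case 1 then show ?case by (cases j) auto
next
  case 2 then show ?case by (cases j) (auto simp: coeff_pCons split: nat.splits)
next
  case (3 n)
  show ?case
  proof (cases j)
    case 0
    then show ?thesis using 3(2)[of 0] by (simp add: coeff_cheb_0)
  next
    case (Suc i)
    have B: "(-1) ^ ((Suc n - i) div 2) * coeff (cheb (Suc n)) i \<ge> 0" using cheb_sign[of "Suc n" i] by simp
    have C: "(-1) ^ ((n - Suc i) div 2) * coeff (cheb n) (Suc i) \<ge> 0" using cheb_sign[of n "Suc i"] by simp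
    have D: "\<bar>2 * a - b\<bar> = 2 * \<bar>a\<bar> + \<bar>b\<bar>" if "s * a \<ge> 0" "s * b \<le> 0" "s = 1 \<or> s = -1" for a b s :: real
      using that by (auto simp: abs_if)
    have "\<bar>coeff (cheb (Suc (Suc n))) (Suc i)\<bar> = 2 * \<bar>coeff (cheb (Suc n)) i\<bar> + \<bar>coeff (cheb n) (Suc i)\<bar>"
    proof (cases "Suc i \<le> n")
      case True
      have e2: "(Suc n - i) div 2 = Suc ((n - Suc i) div 2)" using True by (simp add: Suc_diff_le)
      have C': "(-1) ^ ((Suc n - i) div 2) * coeff (cheb n) (Suc i) \<le> 0"
        using C unfolding e2 by simp
      show ?thesis unfolding coeff_cheb_Suc
        by (rule D[OF B C']) (simp add: minus_one_power_iff)
    next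
      case False
      have z: "coeff (cheb n) (Suc i) = 0"
        using degree_cheb[of n] False by (intro coeff_eq_0) simp
      show ?thesis unfolding coeff_cheb_Suc z by simp
    qed
    then show ?thesis using 3 unfolding Suc by (simp add: coeff_pCons)
  qed
qed

lemma poly_chabs_closed:
  fixes u :: real
  defines "\<rho> \<equiv> u + sqrt (1 + u\<^sup>2)" and "\<sigma> \<equiv> sqrt (1 + u\<^sup>2) - u"
  shows "poly (chabs n) u = (\<rho> ^ n + (-\<sigma>) ^ n) / 2"
proof (induction n rule: cheb.induct)
  case 1 then show ?case by simp
next
  case 2 then show ?case by (simp add: \<rho>_def \<sigma>_def)
next
  case (3 n)
  have s2: "sqrt (1 + u\<^sup>2) ^ 2 = 1 + u\<^sup>2" by (simp add: add_pos_nonneg)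
  have r: "\<rho> ^ 2 = 2 * u * \<rho> + 1" unfolding \<rho>_def power2_eq_square using s2
    by (simp add: algebra_simps power2_eq_square)
  have s: "(-\<sigma>) ^ 2 = 2 * u * (-\<sigma>) + 1" unfolding \<sigma>_def power2_eq_square using s2
    by (simp add: algebra_simps power2_eq_square)
  have m1: "\<rho> ^ Suc (Suc n) = 2 * u * \<rho> ^ Suc n + \<rho> ^ n"
  proof -
    have "\<rho> ^ Suc (Suc n) = (\<rho> * \<rho>) * \<rho> ^ n" by simp
    also have "\<rho> * \<rho> = 2 * u * \<rho> + 1" using r by (simp add: power2_eq_square)
    finally show ?thesis by (simp add: algebra_simps)
  qed
  have m2: "(-\<sigma>) ^ Suc (Suc n) = 2 * u * (-\<sigma>) ^ Suc n + (-\<sigma>) ^ n"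
  proof -
    have "(-\<sigma>) ^ Suc (Suc n) = ((-\<sigma>) * (-\<sigma>)) * (-\<sigma>) ^ n" by simp
    also have "(-\<sigma>) * (-\<sigma>) = 2 * u * (-\<sigma>) + 1" using s by (simp add: power2_eq_square)
    finally show ?thesis by (simp add: algebra_simps)
  qed
  have "poly (chabs (Suc (Suc n))) u = 2 * u * poly (chabs (Suc n)) u + poly (chabs n) u" by simp
  also have "\<dots> = 2 * u * ((\<rho> ^ Suc n + (-\<sigma>) ^ Suc n) / 2) + (\<rho> ^ n + (-\<sigma>) ^ n) / 2"
    using 3 by (simp only:)
  also have "\<dots> = ((2 * u * \<rho> ^ Suc n + \<rho> ^ n) + (2 * u * (-\<sigma>) ^ Suc n + (-\<sigma>) ^ n)) / 2"
    by (simp add: field_simps)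
  also have "\<dots> = (\<rho> ^ Suc (Suc n) + (-\<sigma>) ^ Suc (Suc n)) / 2"
    by (simp only: m1 m2)
  finally show ?case .
qed


definition om :: "(nat \<Rightarrow> real) \<Rightarrow> nat \<Rightarrow> nat \<Rightarrow> real poly" where
  "om x K l = (\<Prod>m \<in> {0..K} - {l}. [:- x m, 1:])"

definition lag :: "(nat \<Rightarrow> real) \<Rightarrow> nat \<Rightarrow> nat \<Rightarrow> real poly" where
  "lag x K l = smult (1 / poly (om x K l) (x l)) (om x K l)"

lemma poly_om: "poly (om x K l) t = (\<Prod>m \<in> {0..K} - {l}. t - x m)"
  by (simp add: om_def poly_prod)

lemma degree_om: "l \<le> K \<Longrightarrow> degree (om x K l) \<le> K"
proof -
  assume that: "l \<le> K"
  have "degree (om x K l) \<le> (\<Sum>m \<in> {0..K} - {l}. degree [:- x m, 1:])"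
    unfolding om_def using degree_prod_sum_le[of "{0..K} - {l}" "\<lambda>m. [:- x m, 1:]"] by (simp add: o_def)
  also have "\<dots> \<le> card ({0..K} - {l})" by simp
  also have "\<dots> \<le> K" using that by (auto simp: card_Diff_singleton)
  finally show ?thesis .
qed

lemma degree_lag: "l \<le> K \<Longrightarrow> degree (lag x K l) \<le> K"
  unfolding lag_def using degree_om[of l K x] degree_smult_le order.trans by blast

lemma poly_lag:
  assumes inj: "inj_on x {0..K}" and l: "l \<le> K" and m: "m \<le> K"
  shows "poly (lag x K l) (x m) = (if l = m then 1 else 0)"
proof (cases "l = m")
  case True
  have "poly (om x K l) (x l) \<noteq> 0"
    unfolding poly_om using inj l by (auto simp: prod_zero_iff inj_on_def)
  then show ?thesis using True by (simp add: lag_def)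
next
  case False
  have "poly (om x K l) (x m) = 0"
    unfolding poly_om using False m by (intro prod_zero) auto
  then show ?thesis using False by (simp add: lag_def)
qed

lemma lag_interp:
  assumes inj: "inj_on x {0..K}" and deg: "degree p \<le> K"
  shows "p = (\<Sum>l\<le>K. smult (poly p (x l)) (lag x K l))"
proof (rule poly_eqI_degree[of "x ` {0..K}"])
  fix t assume "t \<in> x ` {0..K}"
  then obtain m where m: "m \<le> K" "t = x m" by auto
  have "poly (\<Sum>l\<le>K. smult (poly p (x l)) (lag x K l)) t = (\<Sum>l\<le>K. poly p (x l) * (if l = m then 1 else 0))"
    unfolding m(2) poly_sum poly_smult using poly_lag[OF inj _ m(1)] by (intro sum.cong) auto
  also have "\<dots> = poly p t" using m by (simp add: mult.commute[of _ "if _ then _ else _"] if_distrib cong: if_cong)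
  finally show "poly p t = poly (\<Sum>l\<le>K. smult (poly p (x l)) (lag x K l)) t" by simp
next
  have c: "card (x ` {0..K}) = Suc K" using inj by (simp add: card_image)
  show "degree p < card (x ` {0..K})" using c deg by simp
  have "degree (\<Sum>l\<le>K. smult (poly p (x l)) (lag x K l)) \<le> K"
    by (rule degree_sum_le) (auto intro: order.trans[OF degree_smult_le] degree_lag)
  then show "degree (\<Sum>l\<le>K. smult (poly p (x l)) (lag x K l)) < card (x ` {0..K})" using c by simp
qed

lemma lag_moment:
  assumes inj: "inj_on x {0..K}" and m: "m \<le> K"
  shows "(\<Sum>l\<le>K. coeff (lag x K l) j * x l ^ m) = (if j = m then 1 else 0)"
proof -
  have "monom 1 m = (\<Sum>l\<le>K. smult (poly (monom 1 m) (x l)) (lag x K l))"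
    by (rule lag_interp[OF inj]) (simp add: degree_monom_eq m)
  then have "coeff (monom (1::real) m) j = coeff (\<Sum>l\<le>K. smult (x l ^ m) (lag x K l)) j"
    by (simp add: poly_monom)
  then show ?thesis by (auto simp: coeff_sum coeff_monom mult.commute)
qed

definition Ev :: "(nat \<Rightarrow> real) \<Rightarrow> nat set \<Rightarrow> real poly" where
  "Ev x B = (\<Prod>m\<in>B. [:- (x m)\<^sup>2, 0, 1:])"

lemma Ev_coeff:
  assumes "finite B"
  shows "degree (Ev x B) \<le> 2 * card B \<and> (\<forall>i. coeff (Ev x B) (Suc (2 * i)) = 0 \<and>
           (-1) ^ (card B - i) * coeff (Ev x B) (2 * i) \<ge> 0)"
  using assms
proof (induction B rule: finite_induct)
  case empty
  show ?case by (auto simp: Ev_def coeff_1 split: if_splits)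
next
  case (insert b B)
  let ?E = "Ev x B" and ?a = "(x b)\<^sup>2"
  have eq: "Ev x (insert b B) = [:- ?a, 0, 1:] * ?E" using insert by (simp add: Ev_def)
  have eq2: "[:- ?a, 0, 1:] * ?E = smult (- ?a) ?E + pCons 0 (pCons 0 ?E)"
    by (simp add: algebra_simps)
  have cardI: "card (insert b B) = Suc (card B)" using insert by simp
  have IH1: "degree ?E \<le> 2 * card B" and IH2: "\<And>i. coeff ?E (Suc (2 * i)) = 0"
    and IH3: "\<And>i. (-1) ^ (card B - i) * coeff ?E (2 * i) \<ge> 0" using insert.IH by auto
  have deg: "degree (Ev x (insert b B)) \<le> 2 * card (insert b B)"
  proof -
    have "degree ([:- ?a, 0, 1:] * ?E) \<le> degree [:- ?a, 0, 1:] + degree ?E" by (rule degree_mult_le)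
    also have "\<dots> \<le> 2 + 2 * card B" using IH1 by simp
    finally show ?thesis unfolding eq cardI by simp
  qed
  have c_odd: "coeff (Ev x (insert b B)) (Suc (2 * i)) = 0" for i
  proof (cases i)
    case 0 then show ?thesis unfolding eq eq2 using IH2[of 0] by simp
  next
    case (Suc i') then show ?thesis unfolding eq eq2 using IH2[of i] IH2[of i'] by simp
  qed
  have c_even: "(-1) ^ (card (insert b B) - i) * coeff (Ev x (insert b B)) (2 * i) \<ge> 0" for i
  proof (cases i)
    case 0
    have c0: "coeff (Ev x (insert b B)) 0 = - ?a * coeff ?E 0" unfolding eq eq2 by simp
    have "(-1) ^ (card (insert b B) - i) * coeff (Ev x (insert b B)) (2 * i) = ?a * ((-1) ^ (card B) * coeff ?E 0)"
      unfolding 0 cardI by (simp add: c0)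
    moreover have "(-1) ^ (card B) * coeff ?E 0 \<ge> 0" using IH3[of 0] by simp
    ultimately show ?thesis by simp
  next
    case (Suc i')
    have cf: "coeff (Ev x (insert b B)) (2 * i) = - ?a * coeff ?E (2 * i) + coeff ?E (2 * i')"
      unfolding eq eq2 Suc by simp
    have t1: "(-1) ^ (Suc (card B) - i) * coeff ?E (2 * i') \<ge> 0"
      using IH3[of i'] Suc by simp
    have t2: "(-1) ^ (Suc (card B) - i) * (- ?a * coeff ?E (2 * i)) \<ge> 0"
    proof (cases "i \<le> card B")
      case True
      have "Suc (card B) - i = Suc (card B - i)" using True by simp
      then have "(-1) ^ (Suc (card B) - i) * (- ?a * coeff ?E (2 * i)) = ?a * ((-1) ^ (card B - i) * coeff ?E (2 * i))"
        by simp
      then show ?thesis using IH3[of i] by simp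
    next
      case False
      have "coeff ?E (2 * i) = 0" using IH1 False by (intro coeff_eq_0) simp
      then show ?thesis by simp
    qed
    show ?thesis unfolding cf cardI using t1 t2 by (simp add: algebra_simps)
  qed
  show ?case using deg c_odd c_even by blast
qed

lemma prod_pair:
  fixes f :: "nat \<Rightarrow> 'a::comm_monoid_mult"
  assumes A: "A \<subseteq> {0..K}" and symA: "\<And>m. m \<in> A \<Longrightarrow> K - m \<in> A"
  shows "(\<Prod>m\<in>A. f m) = (\<Prod>m\<in>{m\<in>A. 2 * m < K}. f m * f (K - m)) *
            (if even K \<and> K div 2 \<in> A then f (K div 2) else 1)"
proof -
  have fin: "finite A" using A finite_subset by blast
  let ?A1 = "{m\<in>A. 2 * m < K}" and ?A2 = "{m\<in>A. 2 * m > K}" and ?A3 = "{m\<in>A. 2 * m = K}"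
  have split: "A = ?A1 \<union> ?A2 \<union> ?A3" by auto
  have "(\<Prod>m\<in>A. f m) = (\<Prod>m\<in>?A1. f m) * (\<Prod>m\<in>?A2. f m) * (\<Prod>m\<in>?A3. f m)"
    using fin by (subst split, subst prod.union_disjoint, auto, subst prod.union_disjoint, auto)
  moreover have "?A2 = (\<lambda>m. K - m) ` ?A1"
  proof
    show "?A2 \<subseteq> (\<lambda>m. K - m) ` ?A1"
    proof
      fix m assume m: "m \<in> ?A2"
      then have "m \<le> K" using A by auto
      then have "m = K - (K - m)" by simp
      moreover have "K - m \<in> ?A1" using m symA \<open>m \<le> K\<close> by auto
      ultimately show "m \<in> (\<lambda>m. K - m) ` ?A1" by blast
    qed
    show "(\<lambda>m. K - m) ` ?A1 \<subseteq> ?A2" using symA by auto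
  qed
  moreover have "inj_on (\<lambda>m. K - m) ?A1" using A by (auto simp: inj_on_def)
  moreover have "(\<Prod>m\<in>?A3. f m) = (if even K \<and> K div 2 \<in> A then f (K div 2) else 1)"
  proof (cases "even K \<and> K div 2 \<in> A")
    case True
    then have "?A3 = {K div 2}" by auto
    then show ?thesis using True by simp
  next
    case False
    then have "?A3 = {}" by auto
    then show ?thesis using False by (simp only:) simp
  qed
  ultimately show ?thesis by (simp add: prod.reindex prod.distrib)
qed

lemma card_half: "card {m::nat. 2 * m < K} = (K + 1) div 2"
proof -
  have "{m::nat. 2 * m < K} = {..<(K + 1) div 2}" by auto
  then show ?thesis by simp
qed

lemma lin_mult_pair: "[:- a, 1:] * [:a, 1:] = [:- (a\<^sup>2), 0, 1::real:]"
  by (simp add: power2_eq_square)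

lemma coeff_lin_mult: "coeff ([:c, 1:] * (P :: real poly)) j = c * coeff P j + (if j = 0 then 0 else coeff P (j - 1))"
proof -
  have "[:c, 1:] * P = smult c P + pCons 0 (smult 1 P)" by (simp add: add.commute)
  then show ?thesis by (cases j) (simp_all add: coeff_pCons)
qed

lemma om_sign:
  assumes K: "K > 0" and sym: "\<And>m. m \<le> K \<Longrightarrow> x (K - m) = - x m"
    and inj: "inj_on x {0..K}" and l: "l \<le> K" and j: "j \<le> K" and par: "even (K + j)"
  shows "(-1) ^ ((K - j) div 2) * coeff (om x K l) j \<ge> 0"
proof (cases "2 * l = K")
  case True
  let ?A = "{0..K} - {l}"
  have symA: "K - m \<in> ?A" if "m \<in> ?A" for m using that True by auto
  have "om x K l = (\<Prod>m\<in>{m\<in>?A. 2 * m < K}. [:- x m, 1:] * [:- x (K - m), 1:]) *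
            (if even K \<and> K div 2 \<in> ?A then [:- x (K div 2), 1:] else 1)"
    unfolding om_def by (rule prod_pair[of ?A K "\<lambda>m. [:- x m, 1:]"]) (use symA in auto)
  also have "(if even K \<and> K div 2 \<in> ?A then [:- x (K div 2), 1:] else 1) = 1" using True by auto
  also have "{m\<in>?A. 2 * m < K} = {m. 2 * m < K}" using True by auto
  also have "(\<Prod>m\<in>{m. 2 * m < K}. [:- x m, 1:] * [:- x (K - m), 1:]) = Ev x {m. 2 * m < K}"
    unfolding Ev_def by (intro prod.cong refl) (simp add: sym lin_mult_pair power2_eq_square)
  finally have om: "om x K l = Ev x {m. 2 * m < K}" by simp
  obtain h where h: "K = 2 * h" using True by blast
  obtain i where i: "j = 2 * i" using par h by (metis dvd_add_right_iff dvd_triv_left evenE)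
  have fin: "finite {m::nat. 2 * m < K}" by (rule finite_subset[of _ "{..<K}"]) auto
  have cB: "card {m::nat. 2 * m < K} = h" unfolding card_half h by simp
  have "(K - j) div 2 = h - i" unfolding h i by simp
  then show ?thesis unfolding om using Ev_coeff[OF fin, of x] cB i by simp
next
  case False
  let ?A = "{0..K} - {l}" and ?A' = "{0..K} - {l, K - l}"
  have Kl: "K - l \<in> ?A" using False l by auto
  have om1: "om x K l = [:x l, 1:] * (\<Prod>m\<in>?A'. [:- x m, 1:])"
  proof -
    have "om x K l = [:- x (K - l), 1:] * (\<Prod>m\<in>?A - {K - l}. [:- x m, 1:])"
      unfolding om_def by (rule prod.remove[OF _ Kl]) simp
    moreover have "?A - {K - l} = ?A'" by auto
    ultimately show ?thesis using sym[OF l] by simp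
  qed
  have symA: "K - m \<in> ?A'" if "m \<in> ?A'" for m using that l by auto
  have "(\<Prod>m\<in>?A'. [:- x m, 1:]) = (\<Prod>m\<in>{m\<in>?A'. 2 * m < K}. [:- x m, 1:] * [:- x (K - m), 1:]) *
            (if even K \<and> K div 2 \<in> ?A' then [:- x (K div 2), 1:] else 1)"
    by (rule prod_pair[of ?A' K "\<lambda>m. [:- x m, 1:]"]) (use symA in auto)
  also have "(\<Prod>m\<in>{m\<in>?A'. 2 * m < K}. [:- x m, 1:] * [:- x (K - m), 1:]) = Ev x {m\<in>?A'. 2 * m < K}"
    unfolding Ev_def by (intro prod.cong refl) (simp add: sym lin_mult_pair power2_eq_square)
  also have "(if even K \<and> K div 2 \<in> ?A' then [:- x (K div 2), 1:] else 1) = (if even K then [:0, 1:] else 1)"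
  proof (cases "even K")
    case True
    then have "K div 2 \<in> ?A'" using False l by auto
    moreover have "x (K div 2) = 0" using sym[of "K div 2"] True by (metis add_self_div_2 diff_add_inverse2 div_le_dividend evenE mult_2 neg_equal_zero)
    ultimately show ?thesis using True by simp
  qed simp
  finally have om2: "(\<Prod>m\<in>?A'. [:- x m, 1:]) = Ev x {m\<in>?A'. 2 * m < K} * (if even K then [:0, 1:] else 1)" .
  let ?B = "{m\<in>?A'. 2 * m < K}"
  have finB: "finite ?B" by simp
  have cB: "card ?B = (K + 1) div 2 - 1"
  proof -
    have "?B = {m. 2 * m < K} - {min l (K - l)}" using False l by auto
    moreover have "min l (K - l) \<in> {m. 2 * m < K}" using False l by auto
    moreover have "finite {m::nat. 2 * m < K}" by (rule finite_subset[of _ "{..<K}"]) auto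
    ultimately show ?thesis by (simp add: card_half)
  qed
  note EC = Ev_coeff[OF finB, of x]
  show ?thesis
  proof (cases "even K")
    case True
    obtain h where h: "K = 2 * h" using True by blast
    obtain i where i: "j = 2 * i" using par h by (metis dvd_add_right_iff dvd_triv_left evenE)
    show ?thesis
    proof (cases i)
      case 0
      have "coeff (om x K l) j = 0" unfolding om1 om2 coeff_lin_mult using True i 0 by simp
      then show ?thesis by simp
    next
      case (Suc i')
      have cf: "coeff (om x K l) j = coeff (Ev x ?B) (2 * i')"
        unfolding om1 om2 coeff_lin_mult using True i Suc EC by simp
      have e0: "(K - j) div 2 = (K + 1) div 2 - 1 - i'" unfolding h i Suc by simp
      have e: "(K - j) div 2 = card ?B - i'" using e0 cB by simp
      show ?thesis unfolding cf e using EC by simp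
    qed
  next
    case Fa: False
    obtain h where h: "K = 2 * h + 1" using Fa by (metis oddE)
    obtain i where i: "j = 2 * i + 1" using par h by (metis Fa dvd_add_left_iff oddE)
    have cf: "coeff (om x K l) j = coeff (Ev x ?B) (2 * i)"
      unfolding om1 om2 coeff_lin_mult using Fa i EC by simp
    have e0: "(K - j) div 2 = (K + 1) div 2 - 1 - i" unfolding h i by simp
    have e: "(K - j) div 2 = card ?B - i" using e0 cB by simp
    show ?thesis unfolding cf e using EC by simp
  qed
qed

lemma D_sign:
  assumes dec: "\<And>a b. a < b \<Longrightarrow> b \<le> K \<Longrightarrow> x b < x a" and l: "l \<le> K"
  shows "(-1) ^ l * poly (om x K l) (x l) > 0"
proof -
  have split: "{0..K} - {l} = {0..<l} \<union> {Suc l..K}" using l by auto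
  have "poly (om x K l) (x l) = (\<Prod>m\<in>{0..<l}. x l - x m) * (\<Prod>m\<in>{Suc l..K}. x l - x m)"
    unfolding poly_om split by (rule prod.union_disjoint) auto
  also have "(\<Prod>m\<in>{0..<l}. x l - x m) = (-1) ^ l * (\<Prod>m\<in>{0..<l}. x m - x l)"
    using prod_uminus[of "\<lambda>m. x m - x l" "{0..<l}"] by simp
  finally have eq: "(-1) ^ l * poly (om x K l) (x l) = (\<Prod>m\<in>{0..<l}. x m - x l) * (\<Prod>m\<in>{Suc l..K}. x l - x m)"
    by (simp add: mult.assoc[symmetric] power_mult_distrib[symmetric])
  have p1: "(\<Prod>m\<in>{0..<l}. x m - x l) > 0" using dec l by (intro prod_pos) auto
  have p2: "(\<Prod>m\<in>{Suc l..K}. x l - x m) > 0" using dec by (intro prod_pos) auto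
  show ?thesis unfolding eq using p1 p2 by simp
qed

lemma lag_abs:
  assumes K: "K > 0" and sym: "\<And>m. m \<le> K \<Longrightarrow> x (K - m) = - x m"
    and dec: "\<And>a b. a < b \<Longrightarrow> b \<le> K \<Longrightarrow> x b < x a"
    and j: "j \<le> K" and par: "even (K + j)"
    and degT: "degree T \<le> K" and Tx: "\<And>l. l \<le> K \<Longrightarrow> poly T (x l) = (-1) ^ l"
  shows "(\<Sum>l\<le>K. \<bar>coeff (lag x K l) j\<bar>) \<le> \<bar>coeff T j\<bar>"
proof -
  have inj: "inj_on x {0..K}"
  proof (rule inj_onI)
    fix a b assume "a \<in> {0..K}" "b \<in> {0..K}" "x a = x b"
    then show "a = b" using dec[of a b] dec[of b a] by (cases a b rule: linorder_cases) auto
  qed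
  define \<sigma> :: real where "\<sigma> = (-1) ^ ((K - j) div 2)"
  have s2: "\<bar>\<sigma>\<bar> = 1" unfolding \<sigma>_def by simp
  have each: "\<bar>coeff (lag x K l) j\<bar> = \<sigma> * (coeff (lag x K l) j * (-1) ^ l)" if l: "l \<le> K" for l
  proof -
    define D where "D = poly (om x K l) (x l)"
    have Dp: "(-1) ^ l * D > 0" unfolding D_def by (rule D_sign) (use dec l in auto)
    have om: "\<sigma> * coeff (om x K l) j \<ge> 0" unfolding \<sigma>_def by (rule om_sign[OF K sym inj l j par])
    have "\<sigma> * (coeff (lag x K l) j * (-1) ^ l) = (\<sigma> * coeff (om x K l) j) / ((-1) ^ l * D)"
      unfolding lag_def D_def[symmetric] by (cases "even l") (auto simp: field_simps minus_one_power_iff)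
    then have nn: "\<sigma> * (coeff (lag x K l) j * (-1) ^ l) \<ge> 0" using om Dp by simp
    have "\<bar>\<sigma> * (coeff (lag x K l) j * (-1) ^ l)\<bar> = \<bar>coeff (lag x K l) j\<bar>"
      using s2 by (simp add: abs_mult)
    then show ?thesis using nn by simp
  qed
  have "(\<Sum>l\<le>K. \<bar>coeff (lag x K l) j\<bar>) = \<sigma> * (\<Sum>l\<le>K. coeff (lag x K l) j * (-1) ^ l)"
    using each by (simp add: sum_distrib_left)
  also have "(\<Sum>l\<le>K. coeff (lag x K l) j * (-1) ^ l) = coeff (\<Sum>l\<le>K. smult (poly T (x l)) (lag x K l)) j"
    by (simp add: coeff_sum Tx mult.commute)
  also have "(\<Sum>l\<le>K. smult (poly T (x l)) (lag x K l)) = T" using lag_interp[OF inj degT] by simp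
  also have "\<sigma> * coeff T j \<le> \<bar>coeff T j\<bar>" using s2 by (metis abs_ge_self abs_mult mult_1)
  finally show ?thesis .
qed

definition cx :: "nat \<Rightarrow> nat \<Rightarrow> real" where
  "cx K l = cos (real l * pi / real K)"

lemma cx_dec: assumes "K > 0" "a < b" "b \<le> K" shows "cx K b < cx K a"
proof -
  have "real a * pi / real K < real b * pi / real K" using assms by (simp add: divide_strict_right_mono)
  moreover have "real b * pi / real K \<le> pi" using assms by (simp add: field_simps)
  ultimately show ?thesis unfolding cx_def
    by (subst cos_mono_less_eq) (auto simp: field_simps)
qed

lemma cx_sym: assumes "K > 0" "m \<le> K" shows "cx K (K - m) = - cx K m"
proof -
  have "real (K - m) * pi / real K = pi - real m * pi / real K" using assms by (simp add: field_simps of_nat_diff)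
  then show ?thesis unfolding cx_def by simp
qed

lemma cx_cheb: assumes "K > 0" shows "poly (cheb K) (cx K l) = (-1) ^ l"
proof -
  have "real K * (real l * pi / real K) = real l * pi" using assms by simp
  then show ?thesis unfolding cx_def cheb_cos by simp
qed

lemma cx_bound: "\<bar>cx K l\<bar> \<le> 1" unfolding cx_def by simp

lemma cx_inj: "inj_on (cx K) {0..K}"
proof (cases "K = 0")
  case True then show ?thesis by simp
next
  case False
  show ?thesis
  proof (rule inj_onI)
    fix a b assume "a \<in> {0..K}" "b \<in> {0..K}" "cx K a = cx K b"
    then show "a = b" using cx_dec[of K a b] cx_dec[of K b a] False by (cases a b rule: linorder_cases) auto
  qed
qed

lemma cheb_lag_abs:
  assumes j: "j \<le> K" and par: "even (K + j)"
  shows "(\<Sum>l\<le>K. \<bar>coeff (lag (cx K) K l) j\<bar>) \<le> \<bar>coeff (cheb K) j\<bar>"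
proof (cases "K = 0")
  case True
  then show ?thesis using j by (simp add: lag_def om_def)
next
  case False
  then show ?thesis
    by (intro lag_abs[OF _ cx_sym cx_dec j par degree_cheb cx_cheb]) auto
qed


lemma degree_chabs: "degree (chabs n) \<le> n"
proof (rule degree_le, intro allI impI)
  fix i assume "n < i"
  then have "degree (cheb n) < i" using degree_cheb[of n] by linarith
  then show "coeff (chabs n) i = 0" by (simp add: coeff_chabs coeff_eq_0)
qed

lemma poly_sum_upto:
  fixes p :: "real poly"
  assumes "degree p \<le> N" shows "poly p x = (\<Sum>i\<le>N. coeff p i * x ^ i)"
proof -
  have "(\<Sum>i\<le>degree p. coeff p i * x ^ i) = (\<Sum>i\<le>N. coeff p i * x ^ i)"
    using assms by (intro sum.mono_neutral_left) (auto simp: coeff_eq_0)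
  then show ?thesis by (simp add: poly_altdef)
qed

lemma chabs_nonneg: "coeff (chabs n) j \<ge> 0" by (simp add: coeff_chabs)

lemma rho_le_exp: "(u::real) \<ge> 0 \<Longrightarrow> u + sqrt (1 + u\<^sup>2) \<le> exp u"
proof -
  assume u: "u \<ge> 0"
  have "sqrt (1 + u\<^sup>2) \<le> 1 + u\<^sup>2 / 2"
    by (rule real_le_lsqrt) (auto simp: power2_eq_square algebra_simps add_nonneg_nonneg u)
  then show ?thesis using exp_lower_Taylor_quadratic[OF u] by simp
qed

lemma chabs_sum_bound:
  fixes u :: real assumes u: "u \<ge> 0" and k: "k \<ge> 1"
  shows "poly (chabs k) u + poly (chabs (Suc k)) u \<le> exp (2 * real k * u)"
proof -
  define s where "s = sqrt (1 + u\<^sup>2)"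
  define \<rho> where "\<rho> = u + s"
  define \<sigma> where "\<sigma> = s - u"
  have s1: "s \<ge> 1" unfolding s_def by simp
  have ss: "s * s = 1 + u\<^sup>2" unfolding s_def by (simp add: add_pos_nonneg)
  have su: "s \<ge> u" unfolding s_def by (rule real_le_rsqrt) simp
  have rs: "\<rho> * \<sigma> = 1" unfolding \<rho>_def \<sigma>_def using ss by (simp add: algebra_simps power2_eq_square)
  have r1: "\<rho> \<ge> 1" unfolding \<rho>_def using s1 u by simp
  have sg0: "\<sigma> \<ge> 0" unfolding \<sigma>_def using su by simp
  have sg1: "\<sigma> \<le> 1"
  proof (rule ccontr)
    assume "\<not> \<sigma> \<le> 1"
    then have "\<rho> * 1 < \<rho> * \<sigma>" using r1 by (intro mult_strict_left_mono) auto
    then show False using rs r1 by simp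
  qed
  have rsum: "\<rho> + \<sigma> \<ge> 2" unfolding \<rho>_def \<sigma>_def using s1 by simp
  have P: "poly (chabs n) u = (\<rho> ^ n + (-\<sigma>) ^ n) / 2" for n
    unfolding poly_chabs_closed \<rho>_def \<sigma>_def s_def ..
  have a: "\<rho> ^ Suc k \<le> \<rho> ^ (2 * k)" using r1 k by (intro power_increasing) auto
  have b: "(-\<sigma>) ^ k + (-\<sigma>) ^ Suc k \<le> 1 - \<sigma>"
  proof -
    have "(-\<sigma>) ^ k + (-\<sigma>) ^ Suc k = (-\<sigma>) ^ k * (1 - \<sigma>)" by (simp add: algebra_simps)
    also have "\<dots> \<le> \<bar>(-\<sigma>) ^ k\<bar> * (1 - \<sigma>)" using sg1 by (intro mult_right_mono abs_ge_self) auto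
    also have "\<bar>(-\<sigma>) ^ k\<bar> = \<sigma> ^ k" using sg0 by (simp add: power_abs)
    also have "\<sigma> ^ k * (1 - \<sigma>) \<le> 1 * (1 - \<sigma>)" using sg0 sg1 by (intro mult_right_mono power_le_one) auto
    finally show ?thesis by simp
  qed
  have c: "\<rho> ^ k + (1 - \<sigma>) \<le> \<rho> ^ (2 * k)"
  proof -
    have "1 - \<sigma> \<le> \<rho> - 1" using rsum by simp
    also have "\<rho> - 1 \<le> \<rho> ^ k - 1" using r1 k by (simp add: power_increasing[of 1 k \<rho>, simplified])
    also have "\<rho> ^ k - 1 \<le> \<rho> ^ k * (\<rho> ^ k - 1)"
      using r1 by (intro mult_right_mono[of 1 "\<rho> ^ k", simplified]) (auto simp: one_le_power)
    also have "\<rho> ^ k * (\<rho> ^ k - 1) = \<rho> ^ (2 * k) - \<rho> ^ k" by (simp add: algebra_simps power_mult power2_eq_square mult_2 power_add)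
    finally show ?thesis by simp
  qed
  have "poly (chabs k) u + poly (chabs (Suc k)) u \<le> \<rho> ^ (2 * k)"
    unfolding P using a b c by (simp add: field_simps)
  also have "\<rho> ^ (2 * k) \<le> exp u ^ (2 * k)" using rho_le_exp[OF u] r1 unfolding \<rho>_def s_def
    by (intro power_mono) auto
  also have "exp u ^ (2 * k) = exp (2 * real k * u)" by (simp add: exp_of_nat_mult[symmetric] mult_ac)
  finally show ?thesis .
qed

lemma swap_delta:
  fixes f :: "'b \<Rightarrow> real" and g :: "'a \<Rightarrow> real"
  assumes G: "finite G" and L: "finite L" and yG: "\<And>l. l \<in> L \<Longrightarrow> y l \<in> G"
  shows "(\<Sum>t\<in>G. (\<Sum>l\<in>L. if y l = t then f l else 0) * g t) = (\<Sum>l\<in>L. f l * g (y l))"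
proof -
  have "(\<Sum>t\<in>G. (\<Sum>l\<in>L. if y l = t then f l else 0) * g t) = (\<Sum>t\<in>G. \<Sum>l\<in>L. if y l = t then f l * g t else 0)"
    by (auto simp: sum_distrib_right intro!: sum.cong)
  also have "\<dots> = (\<Sum>l\<in>L. \<Sum>t\<in>G. if y l = t then f l * g t else 0)" by (rule sum.swap)
  also have "\<dots> = (\<Sum>l\<in>L. f l * g (y l))" using G yG by (intro sum.cong refl) (simp add: sum.delta)
  finally show ?thesis .
qed

lemma swap_delta_abs:
  fixes f :: "'b \<Rightarrow> real" and y :: "'b \<Rightarrow> 'a"
  assumes G: "finite G" and L: "finite L" and yG: "\<And>l. l \<in> L \<Longrightarrow> y l \<in> G"
  shows "(\<Sum>t\<in>G. \<bar>\<Sum>l\<in>L. if y l = t then f l else 0\<bar>) \<le> (\<Sum>l\<in>L. \<bar>f l\<bar>)"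
proof -
  have "(\<Sum>t\<in>G. \<bar>\<Sum>l\<in>L. if y l = t then f l else 0\<bar>) \<le> (\<Sum>t\<in>G. \<Sum>l\<in>L. \<bar>if y l = t then f l else 0\<bar>)"
    by (intro sum_mono sum_abs)
  also have "\<dots> = (\<Sum>t\<in>G. (\<Sum>l\<in>L. if y l = t then \<bar>f l\<bar> else 0) * 1)"
    by (intro sum.cong refl) (simp add: if_distrib cong: if_cong)
  also have "\<dots> = (\<Sum>l\<in>L. \<bar>f l\<bar> * 1)" by (rule swap_delta[OF G L]) (rule yG)
  finally show ?thesis by simp
qed

lemma oneD:
  fixes k :: nat and r :: real
  assumes r: "r > 0"
  shows "\<exists>G \<nu>. finite G \<and> G \<subseteq> {-r..r} \<and>
     (\<forall>j\<le>k. \<forall>m\<le>k. (\<Sum>t\<in>G. \<nu> j t * t ^ m) = (if j = m then 1 else 0)) \<and>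
     (\<Sum>j\<le>k. \<Sum>t\<in>G. \<bar>\<nu> j t\<bar>) \<le> exp (2 * real k / r)"
proof -
  define KK where "KK j = (if even (k + j) then k else Suc k)" for j
  define y where "y j l = r * cx (KK j) l" for j l
  define G where "G = (\<lambda>l. r * cx k l) ` {0..k} \<union> (\<lambda>l. r * cx (Suc k) l) ` {0..Suc k}"
  define c where "c j l = coeff (lag (cx (KK j)) (KK j) l) j / r ^ j" for j l
  define \<nu> where "\<nu> j t = (\<Sum>l\<le>KK j. if y j l = t then c j l else 0)" for j t
  have finG: "finite G" unfolding G_def by simp
  have yG: "y j l \<in> G" if "l \<in> {..KK j}" for j l
    using that unfolding y_def G_def KK_def by (auto split: if_splits)
  have Gr: "G \<subseteq> {-r..r}"
  proof
    fix t assume "t \<in> G"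
    then obtain K l where t: "t = r * cx K l" unfolding G_def by auto
    have "\<bar>t\<bar> \<le> r * 1" unfolding t abs_mult using r cx_bound[of K l] by (simp add: mult_left_le)
    then show "t \<in> {-r..r}" by auto
  qed
  have KKj: "j \<le> KK j" "k \<le> KK j" "even (KK j + j)" if "j \<le> k" for j
    using that unfolding KK_def by auto
  have mom: "(\<Sum>t\<in>G. \<nu> j t * t ^ m) = (if j = m then 1 else 0)" if j: "j \<le> k" and m: "m \<le> k" for j m
  proof -
    have "(\<Sum>t\<in>G. \<nu> j t * t ^ m) = (\<Sum>l\<le>KK j. c j l * (y j l) ^ m)"
      unfolding \<nu>_def by (rule swap_delta[OF finG _ yG]) auto
    also have "\<dots> = (r ^ m / r ^ j) * (\<Sum>l\<le>KK j. coeff (lag (cx (KK j)) (KK j) l) j * cx (KK j) l ^ m)"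
      unfolding c_def y_def by (simp add: sum_distrib_left power_mult_distrib field_simps)
    also have "(\<Sum>l\<le>KK j. coeff (lag (cx (KK j)) (KK j) l) j * cx (KK j) l ^ m) = (if j = m then 1 else 0)"
      by (rule lag_moment[OF cx_inj]) (use KKj[OF j] m in auto)
    finally show ?thesis using r by simp
  qed
  have ab: "(\<Sum>t\<in>G. \<bar>\<nu> j t\<bar>) \<le> coeff (chabs (KK j)) j * (1 / r) ^ j" if j: "j \<le> k" for j
  proof -
    have "(\<Sum>t\<in>G. \<bar>\<nu> j t\<bar>) \<le> (\<Sum>l\<le>KK j. \<bar>c j l\<bar>)"
      unfolding \<nu>_def by (rule swap_delta_abs[OF finG _ yG]) auto
    also have "\<dots> = (\<Sum>l\<le>KK j. \<bar>coeff (lag (cx (KK j)) (KK j) l) j\<bar>) * (1 / r) ^ j"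
      unfolding c_def using r by (simp add: sum_divide_distrib abs_divide power_one_over)
    also have "\<dots> \<le> \<bar>coeff (cheb (KK j)) j\<bar> * (1 / r) ^ j"
      using KKj[OF j] r by (intro mult_right_mono cheb_lag_abs) auto
    finally show ?thesis by (simp add: coeff_chabs)
  qed
  define u where "u = 1 / r"
  have u: "u \<ge> 0" unfolding u_def using r by simp
  have tot: "(\<Sum>j\<le>k. coeff (chabs (KK j)) j * u ^ j) \<le> exp (2 * real k * u)"
  proof (cases "k = 0")
    case True
    then show ?thesis by (simp add: KK_def)
  next
    case False
    have "(\<Sum>j\<le>k. coeff (chabs (KK j)) j * u ^ j) \<le>
          (\<Sum>j\<le>k. coeff (chabs k) j * u ^ j + coeff (chabs (Suc k)) j * u ^ j)"
      using u by (intro sum_mono) (auto simp: KK_def chabs_nonneg)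
    also have "\<dots> = (\<Sum>j\<le>k. coeff (chabs k) j * u ^ j) + (\<Sum>j\<le>k. coeff (chabs (Suc k)) j * u ^ j)"
      by (rule sum.distrib)
    also have "(\<Sum>j\<le>k. coeff (chabs k) j * u ^ j) = poly (chabs k) u"
      by (rule poly_sum_upto[symmetric]) (rule degree_chabs)
    also have "(\<Sum>j\<le>k. coeff (chabs (Suc k)) j * u ^ j) \<le> (\<Sum>j\<le>Suc k. coeff (chabs (Suc k)) j * u ^ j)"
      using u by (simp add: chabs_nonneg)
    also have "\<dots> = poly (chabs (Suc k)) u"
      by (rule poly_sum_upto[symmetric]) (rule degree_chabs)
    also have "poly (chabs k) u + poly (chabs (Suc k)) u \<le> exp (2 * real k * u)"
      using False u by (intro chabs_sum_bound) auto
    finally show ?thesis by simp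
  qed
  have "(\<Sum>j\<le>k. \<Sum>t\<in>G. \<bar>\<nu> j t\<bar>) \<le> (\<Sum>j\<le>k. coeff (chabs (KK j)) j * u ^ j)"
    unfolding u_def by (intro sum_mono ab) auto
  also have "\<dots> \<le> exp (2 * real k / r)" using tot unfolding u_def by simp
  finally show ?thesis using finG Gr mom by blast
qed


definition am :: "(real^'d::finite) set \<Rightarrow> (real^'d) set \<Rightarrow> (real^'d \<Rightarrow> real) \<Rightarrow> (real^'d) measure" where
  "am \<Omega> X f = distr (point_measure X (\<lambda>x. ennreal (f x))) (restrict_space borel \<Omega>) (\<lambda>x. x)"

lemma space_rb: "space (restrict_space borel \<Omega>) = \<Omega>"
  by (simp add: space_restrict_space)

lemma Om_sets: "\<Omega> \<in> sets (restrict_space borel \<Omega>)"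
  using sets.top[of "restrict_space borel \<Omega>"] by (simp add: space_rb)

lemma am_meas: "X \<subseteq> \<Omega> \<Longrightarrow> (\<lambda>x. x) \<in> measurable (point_measure X (\<lambda>x. ennreal (f x))) (restrict_space borel \<Omega>)"
  by (auto simp: space_rb)

lemma sets_am: "sets (am \<Omega> X f) = sets (restrict_space borel \<Omega>)"
  by (simp add: am_def)

lemma space_am: "space (am \<Omega> X f) = \<Omega>"
  by (simp add: am_def space_rb)

lemma emeasure_am:
  assumes "finite X" "X \<subseteq> \<Omega>" "A \<in> sets (restrict_space borel \<Omega>)"
  shows "emeasure (am \<Omega> X f) A = (\<Sum>a\<in>A \<inter> X. ennreal (f a))"
proof -
  have "emeasure (am \<Omega> X f) A = emeasure (point_measure X (\<lambda>x. ennreal (f x))) ((\<lambda>x. x) -` A \<inter> space (point_measure X (\<lambda>x. ennreal (f x))))"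
    unfolding am_def using assms by (intro emeasure_distr am_meas) auto
  also have "\<dots> = emeasure (point_measure X (\<lambda>x. ennreal (f x))) (A \<inter> X)"
    by (simp add: space_point_measure)
  also have "\<dots> = (\<Sum>a\<in>A \<inter> X. ennreal (f a))"
    using assms by (intro emeasure_point_measure_finite) auto
  finally show ?thesis .
qed

lemma finite_measure_am:
  assumes "finite X" "X \<subseteq> \<Omega>"
  shows "finite_measure (am \<Omega> X f)"
proof (rule finite_measureI)
  have "\<Omega> \<in> sets (restrict_space borel \<Omega>)" by (rule Om_sets)
  then have "emeasure (am \<Omega> X f) (space (am \<Omega> X f)) = (\<Sum>a\<in>\<Omega> \<inter> X. ennreal (f a))"
    unfolding space_am using assms by (intro emeasure_am) auto
  then show "emeasure (am \<Omega> X f) (space (am \<Omega> X f)) \<noteq> \<infinity>" using assms by simp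
qed

lemma measure_am:
  assumes "finite X" "X \<subseteq> \<Omega>" "\<And>x. f x \<ge> 0"
  shows "measure (am \<Omega> X f) \<Omega> = (\<Sum>a\<in>X. f a)"
proof -
  have "\<Omega> \<in> sets (restrict_space borel \<Omega>)" by (rule Om_sets)
  then have "emeasure (am \<Omega> X f) \<Omega> = (\<Sum>a\<in>\<Omega> \<inter> X. ennreal (f a))"
    using assms by (intro emeasure_am) auto
  also have "\<Omega> \<inter> X = X" using assms by auto
  finally have "emeasure (am \<Omega> X f) \<Omega> = ennreal (\<Sum>a\<in>X. f a)" using assms by simp
  then show ?thesis using assms by (simp add: measure_def sum_nonneg)
qed

lemma integral_am:
  assumes "finite X" "X \<subseteq> \<Omega>" "\<And>x. f x \<ge> 0" "g \<in> borel_measurable (restrict_space borel \<Omega>)"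
  shows "integral\<^sup>L (am \<Omega> X f) g = (\<Sum>a\<in>X. f a * g a)"
proof -
  have "integral\<^sup>L (am \<Omega> X f) g = integral\<^sup>L (point_measure X (\<lambda>x. ennreal (f x))) (\<lambda>x. g x)"
    unfolding am_def using assms by (intro integral_distr am_meas) auto
  also have "\<dots> = (\<Sum>a\<in>X. f a *\<^sub>R g a)"
    using assms by (intro lebesgue_integral_point_measure_finite) auto
  finally show ?thesis by simp
qed

definition sam :: "(real^'d::finite) set \<Rightarrow> (real^'d) set \<Rightarrow> (real^'d \<Rightarrow> real) \<Rightarrow> (real^'d) measure \<times> (real^'d) measure" where
  "sam \<Omega> X w = (am \<Omega> X (\<lambda>x. max (w x) 0), am \<Omega> X (\<lambda>x. max (- w x) 0))"

lemma sam_signed: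
  assumes X: "finite X" "X \<subseteq> \<Omega>"
  shows "signed_measure_on \<Omega> (sam \<Omega> X w)"
  unfolding signed_measure_on_def
proof (intro conjI)
  show "sets (fst (sam \<Omega> X w)) = sets (restrict_space borel \<Omega>)" by (simp add: sam_def sets_am)
  show "sets (snd (sam \<Omega> X w)) = sets (restrict_space borel \<Omega>)" by (simp add: sam_def sets_am)
  show "finite_measure (fst (sam \<Omega> X w))" using X by (simp add: sam_def finite_measure_am)
  show "finite_measure (snd (sam \<Omega> X w))" using X by (simp add: sam_def finite_measure_am)
  define P where "P = {x\<in>X. w x > 0}"
  have PX: "P \<subseteq> X" "finite P" using X unfolding P_def by auto
  have Pb: "P \<in> sets (restrict_space borel \<Omega>)"
  proof -
    have "closed P" using PX by (simp add: finite_imp_closed)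
    then have "P \<in> sets borel" by simp
    moreover have "P = \<Omega> \<inter> P" using PX X by auto
    ultimately show ?thesis unfolding sets_restrict_space by blast
  qed
  have OPb: "\<Omega> - P \<in> sets (restrict_space borel \<Omega>)" using Pb Om_sets by auto
  have "emeasure (fst (sam \<Omega> X w)) (\<Omega> - P) = (\<Sum>a\<in>(\<Omega> - P) \<inter> X. ennreal (max (w a) 0))"
    unfolding sam_def fst_conv using X OPb by (rule emeasure_am)
  also have "\<dots> = 0" by (intro sum.neutral) (auto simp: P_def)
  finally have 1: "emeasure (fst (sam \<Omega> X w)) (\<Omega> - P) = 0" .
  have "emeasure (snd (sam \<Omega> X w)) P = (\<Sum>a\<in>P \<inter> X. ennreal (max (- w a) 0))"
    unfolding sam_def snd_conv using X Pb by (rule emeasure_am)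
  also have "\<dots> = 0" by (intro sum.neutral) (auto simp: P_def)
  finally have 2: "emeasure (snd (sam \<Omega> X w)) P = 0" .
  show "\<exists>P\<in>sets (restrict_space borel \<Omega>). emeasure (fst (sam \<Omega> X w)) (\<Omega> - P) = 0 \<and> emeasure (snd (sam \<Omega> X w)) P = 0"
    using Pb 1 2 by blast
qed

lemma sam_tv:
  assumes X: "finite X" "X \<subseteq> \<Omega>"
  shows "tv_norm \<Omega> (sam \<Omega> X w) = (\<Sum>x\<in>X. \<bar>w x\<bar>)"
proof -
  have "tv_norm \<Omega> (sam \<Omega> X w) = (\<Sum>x\<in>X. max (w x) 0) + (\<Sum>x\<in>X. max (- w x) 0)"
    unfolding tv_norm_def sam_def fst_conv snd_conv using X by (simp add: measure_am)
  also have "\<dots> = (\<Sum>x\<in>X. \<bar>w x\<bar>)" by (simp add: sum.distrib[symmetric]) (intro sum.cong; auto)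
  finally show ?thesis .
qed

lemma sam_int:
  assumes X: "finite X" "X \<subseteq> \<Omega>" and g: "g \<in> borel_measurable (restrict_space borel \<Omega>)"
  shows "signed_integral (sam \<Omega> X w) g = (\<Sum>x\<in>X. w x * g x)"
proof -
  have "signed_integral (sam \<Omega> X w) g = (\<Sum>x\<in>X. max (w x) 0 * g x) - (\<Sum>x\<in>X. max (- w x) 0 * g x)"
    unfolding signed_integral_def sam_def fst_conv snd_conv using X g by (simp add: integral_am)
  also have "\<dots> = (\<Sum>x\<in>X. w x * g x)" by (simp add: sum_subtractf[symmetric]) (intro sum.cong; auto simp: algebra_simps max_def)
  finally show ?thesis .
qed

lemma monomial_cont: "continuous_on UNIV (monomial \<alpha>)"
  unfolding monomial_def[abs_def] by (intro continuous_intros)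

lemma monomial_meas: "monomial \<alpha> \<in> borel_measurable (restrict_space borel \<Omega>)"
  by (intro measurable_restrict_space1 borel_measurable_continuous_onI monomial_cont)


lemma grid_finite:
  fixes G :: "real set" assumes G: "finite G"
  shows "finite {x::real^'d::finite. \<forall>i. x $ i \<in> G}"
proof -
  have "{x::real^'d. \<forall>i. x $ i \<in> G} = (\<lambda>f. \<chi> i. f i) ` (PiE UNIV (\<lambda>_. G))"
  proof
    show "{x::real^'d. \<forall>i. x $ i \<in> G} \<subseteq> (\<lambda>f. \<chi> i. f i) ` (PiE UNIV (\<lambda>_. G))"
    proof
      fix x :: "real^'d" assume "x \<in> {x. \<forall>i. x $ i \<in> G}"
      then have "(\<lambda>i. x $ i) \<in> PiE UNIV (\<lambda>_. G)" by (simp add: PiE_UNIV_domain)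
      moreover have "x = (\<chi> i. x $ i)" by simp
      ultimately show "x \<in> (\<lambda>f. \<chi> i. f i) ` (PiE UNIV (\<lambda>_. G))" by blast
    qed
    show "(\<lambda>f. \<chi> i. f i) ` (PiE UNIV (\<lambda>_. G)) \<subseteq> {x::real^'d. \<forall>i. x $ i \<in> G}"
      by (auto simp: PiE_UNIV_domain)
  qed
  then show ?thesis using G by (simp add: finite_PiE)
qed

lemma grid_prod_sum:
  fixes G :: "real set" and f :: "'d::finite \<Rightarrow> real \<Rightarrow> real"
  assumes G: "finite G"
  shows "(\<Sum>x\<in>{x::real^'d. \<forall>i. x $ i \<in> G}. \<Prod>i\<in>UNIV. f i (x $ i)) = (\<Prod>i\<in>UNIV. \<Sum>t\<in>G. f i t)"
proof -
  have "(\<Prod>i\<in>UNIV. \<Sum>t\<in>G. f i t) = (\<Sum>g\<in>PiE UNIV (\<lambda>_. G). \<Prod>i\<in>UNIV. f i (g i))"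
    using G by (intro prod_sum_PiE) auto
  also have "\<dots> = (\<Sum>x\<in>(\<lambda>g. \<chi> i. g i) ` (PiE UNIV (\<lambda>_. G)). \<Prod>i\<in>UNIV. f i (x $ i))"
  proof (subst sum.reindex)
    show "inj_on (\<lambda>g. \<chi> i. g i) (PiE UNIV (\<lambda>_. G))"
      by (rule inj_onI) (metis vec_lambda_beta ext)
  qed simp
  also have "(\<lambda>g. \<chi> i. g i) ` (PiE UNIV (\<lambda>_. G)) = {x::real^'d. \<forall>i. x $ i \<in> G}"
  proof
    show "{x::real^'d. \<forall>i. x $ i \<in> G} \<subseteq> (\<lambda>f. \<chi> i. f i) ` (PiE UNIV (\<lambda>_. G))"
    proof
      fix x :: "real^'d" assume "x \<in> {x. \<forall>i. x $ i \<in> G}"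
      then have "(\<lambda>i. x $ i) \<in> PiE UNIV (\<lambda>_. G)" by (simp add: PiE_UNIV_domain)
      moreover have "x = (\<chi> i. x $ i)" by simp
      ultimately show "x \<in> (\<lambda>f. \<chi> i. f i) ` (PiE UNIV (\<lambda>_. G))" by blast
    qed
    show "(\<lambda>f. \<chi> i. f i) ` (PiE UNIV (\<lambda>_. G)) \<subseteq> {x::real^'d. \<forall>i. x $ i \<in> G}"
      by (auto simp: PiE_UNIV_domain)
  qed
  finally show ?thesis by simp
qed

lemma MI_finite: "finite (multi_indices k :: ('d::finite \<Rightarrow> nat) set)"
proof -
  have "multi_indices k \<subseteq> PiE (UNIV::'d set) (\<lambda>_. {..k})"
  proof
    fix \<alpha> :: "'d \<Rightarrow> nat" assume "\<alpha> \<in> multi_indices k"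
    then have "(\<Sum>i\<in>UNIV. \<alpha> i) \<le> k" by (simp add: multi_indices_def)
    then have "\<alpha> i \<le> k" for i using member_le_sum[of i UNIV \<alpha>] by simp
    then show "\<alpha> \<in> PiE UNIV (\<lambda>_. {..k})" by (simp add: PiE_UNIV_domain)
  qed
  then show ?thesis by (rule finite_subset) (simp add: finite_PiE)
qed

lemma MI_le: "\<alpha> \<in> multi_indices k \<Longrightarrow> \<alpha> i \<le> k"
  using member_le_sum[of i UNIV \<alpha>] by (simp add: multi_indices_def)

lemma MI_zero: "(\<lambda>_. 0) \<in> multi_indices k"
  by (simp add: multi_indices_def)

lemma msn_ge: "\<alpha> \<in> multi_indices k \<Longrightarrow> \<bar>z \<alpha>\<bar> \<le> moment_sup_norm k z"
  unfolding moment_sup_norm_def by (rule Max_ge) (auto simp: MI_finite)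

lemma msn_nonneg: "0 \<le> moment_sup_norm k z"
  using msn_ge[where \<alpha>="\<lambda>_. 0" and k=k and z=z] MI_zero[of k] by fastforce

lemma partB:
  fixes k :: nat and \<Omega> :: "(real^'d::finite) set" and r :: real and z :: "('d \<Rightarrow> nat) \<Rightarrow> real"
  assumes r: "r > 0" and cube: "{x. \<forall>i. \<bar>x $ i\<bar> \<le> r} \<subseteq> \<Omega>"
  shows "\<exists>X w. finite X \<and> X \<subseteq> \<Omega> \<and>
     (\<forall>\<beta>\<in>multi_indices k. (\<Sum>x\<in>X. w x * monomial \<beta> x) = z \<beta>) \<and>
     (\<Sum>x\<in>X. \<bar>w x\<bar>) \<le> exp (2 * real CARD('d) * real k / r) * moment_sup_norm k z"
proof -
  obtain G \<nu> where G: "finite G" "G \<subseteq> {-r..r}"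
    and mom: "\<And>j m. j \<le> k \<Longrightarrow> m \<le> k \<Longrightarrow> (\<Sum>t\<in>G. \<nu> j t * t ^ m) = (if j = m then 1 else 0)"
    and tot: "(\<Sum>j\<le>k. \<Sum>t\<in>G. \<bar>\<nu> j t\<bar>) \<le> exp (2 * real k / r)"
    using oneD[OF r, of k] by blast
  define X where "X = {x::real^'d. \<forall>i. x $ i \<in> G}"
  define MI where "MI = (multi_indices k :: ('d \<Rightarrow> nat) set)"
  define w where "w x = (\<Sum>\<alpha>\<in>MI. z \<alpha> * (\<Prod>i\<in>UNIV. \<nu> (\<alpha> i) (x $ i)))" for x
  define Z where "Z = moment_sup_norm k z"
  have finX: "finite X" unfolding X_def by (rule grid_finite[OF G(1)])
  have XO: "X \<subseteq> \<Omega>"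
  proof
    fix x assume "x \<in> X"
    then have "x $ i \<in> {-r..r}" for i using G(2) unfolding X_def by auto
    then have "\<bar>x $ i\<bar> \<le> r" for i using abs_le_iff by (metis atLeastAtMost_iff minus_le_iff)
    then show "x \<in> \<Omega>" using cube by auto
  qed
  have finMI: "finite MI" unfolding MI_def by (rule MI_finite)
  have moments: "(\<Sum>x\<in>X. w x * monomial \<beta> x) = z \<beta>" if \<beta>: "\<beta> \<in> MI" for \<beta>
  proof -
    have "(\<Sum>x\<in>X. w x * monomial \<beta> x) = (\<Sum>\<alpha>\<in>MI. z \<alpha> * (\<Sum>x\<in>X. \<Prod>i\<in>UNIV. \<nu> (\<alpha> i) (x $ i) * (x $ i) ^ (\<beta> i)))"
      unfolding w_def monomial_def
      by (simp add: sum_distrib_right sum_distrib_left prod.distrib mult.assoc sum.swap[of _ X])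
    also have "\<dots> = (\<Sum>\<alpha>\<in>MI. z \<alpha> * (\<Prod>i\<in>UNIV. \<Sum>t\<in>G. \<nu> (\<alpha> i) t * t ^ (\<beta> i)))"
      unfolding X_def
    proof (intro sum.cong refl)
      fix \<alpha> :: "'d \<Rightarrow> nat"
      show "z \<alpha> * (\<Sum>x\<in>{x::real^'d. \<forall>i. x $ i \<in> G}. \<Prod>i\<in>UNIV. \<nu> (\<alpha> i) (x $ i) * (x $ i) ^ (\<beta> i)) =
            z \<alpha> * (\<Prod>i\<in>UNIV. \<Sum>t\<in>G. \<nu> (\<alpha> i) t * t ^ (\<beta> i))"
        using grid_prod_sum[OF G(1), of "\<lambda>i t. \<nu> (\<alpha> i) t * t ^ (\<beta> i)"] by simp
    qed
    also have "\<dots> = (\<Sum>\<alpha>\<in>MI. z \<alpha> * (if \<alpha> = \<beta> then 1 else 0))"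
    proof (intro sum.cong refl)
      fix \<alpha> assume \<alpha>: "\<alpha> \<in> MI"
      have "(\<Prod>i\<in>UNIV. \<Sum>t\<in>G. \<nu> (\<alpha> i) t * t ^ (\<beta> i)) = (\<Prod>i\<in>UNIV. if \<alpha> i = \<beta> i then 1 else 0)"
        using \<alpha> \<beta> unfolding MI_def by (intro prod.cong refl mom MI_le)
      also have "\<dots> = (if \<alpha> = \<beta> then 1 else 0)"
      proof (cases "\<alpha> = \<beta>")
        case False
        then obtain i where i: "\<alpha> i \<noteq> \<beta> i" by auto
        have "(\<Prod>i\<in>UNIV. if \<alpha> i = \<beta> i then 1 else 0) = (0::real)"
          by (rule prod_zero) (use i in auto)
        then show ?thesis using False by simp
      qed simp
      finally show "z \<alpha> * (\<Prod>i\<in>UNIV. \<Sum>t\<in>G. \<nu> (\<alpha> i) t * t ^ (\<beta> i)) = z \<alpha> * (if \<alpha> = \<beta> then 1 else 0)" by simp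
    qed
    also have "\<dots> = z \<beta>" using \<beta> finMI by (simp add: if_distrib[of "\<lambda>v. z _ * v"] sum.delta cong: if_cong)
    finally show ?thesis .
  qed
  define b where "b j = (\<Sum>t\<in>G. \<bar>\<nu> j t\<bar>)" for j
  have b0: "b j \<ge> 0" for j unfolding b_def by (simp add: sum_nonneg)
  have Z0: "Z \<ge> 0" unfolding Z_def by (rule msn_nonneg)
  have "(\<Sum>x\<in>X. \<bar>w x\<bar>) \<le> (\<Sum>x\<in>X. \<Sum>\<alpha>\<in>MI. \<bar>z \<alpha>\<bar> * (\<Prod>i\<in>UNIV. \<bar>\<nu> (\<alpha> i) (x $ i)\<bar>))"
    unfolding w_def by (intro sum_mono order.trans[OF sum_abs]) (simp add: abs_mult abs_prod)
  also have "\<dots> = (\<Sum>\<alpha>\<in>MI. \<bar>z \<alpha>\<bar> * (\<Prod>i\<in>UNIV. b (\<alpha> i)))"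
    unfolding X_def b_def
  proof (subst sum.swap, intro sum.cong refl)
    fix \<alpha> :: "'d \<Rightarrow> nat"
    show "(\<Sum>x\<in>{x::real^'d. \<forall>i. x $ i \<in> G}. \<bar>z \<alpha>\<bar> * (\<Prod>i\<in>UNIV. \<bar>\<nu> (\<alpha> i) (x $ i)\<bar>)) =
          \<bar>z \<alpha>\<bar> * (\<Prod>i\<in>UNIV. \<Sum>t\<in>G. \<bar>\<nu> (\<alpha> i) t\<bar>)"
      using grid_prod_sum[OF G(1), of "\<lambda>i t. \<bar>\<nu> (\<alpha> i) t\<bar>"] by (simp add: sum_distrib_left[symmetric])
  qed
  also have "\<dots> \<le> (\<Sum>\<alpha>\<in>MI. Z * (\<Prod>i\<in>UNIV. b (\<alpha> i)))"
    using b0 unfolding Z_def MI_def by (intro sum_mono mult_right_mono msn_ge prod_nonneg) auto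
  also have "\<dots> \<le> (\<Sum>\<alpha>\<in>PiE (UNIV::'d set) (\<lambda>_. {..k}). Z * (\<Prod>i\<in>UNIV. b (\<alpha> i)))"
  proof (rule sum_mono2)
    show "finite (PiE (UNIV::'d set) (\<lambda>_. {..k}))" by (simp add: finite_PiE)
    show "MI \<subseteq> PiE UNIV (\<lambda>_. {..k})" unfolding MI_def using MI_le by (auto simp: PiE_UNIV_domain)
  qed (use b0 Z0 in \<open>auto intro!: mult_nonneg_nonneg prod_nonneg\<close>)
  also have "\<dots> = Z * (\<Prod>i\<in>(UNIV::'d set). \<Sum>j\<le>k. b j)"
  proof -
    have "(\<Prod>i\<in>(UNIV::'d set). \<Sum>j\<le>k. b j) = (\<Sum>\<alpha>\<in>PiE (UNIV::'d set) (\<lambda>_. {..k}). \<Prod>i\<in>UNIV. b (\<alpha> i))"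
      by (rule prod_sum_PiE) auto
    then show ?thesis by (simp only: sum_distrib_left)
  qed
  also have "Z * (\<Prod>i\<in>(UNIV::'d set). \<Sum>j\<le>k. b j) = Z * (\<Sum>j\<le>k. b j) ^ CARD('d)" by simp
  also have "\<dots> \<le> Z * exp (2 * real k / r) ^ CARD('d)"
    using tot b0 Z0 unfolding b_def by (intro mult_left_mono power_mono) (auto simp: sum_nonneg)
  also have "Z * exp (2 * real k / r) ^ CARD('d) = exp (2 * real CARD('d) * real k / r) * Z"
    by (simp add: exp_of_nat_mult[symmetric] mult_ac)
  finally have "(\<Sum>x\<in>X. \<bar>w x\<bar>) \<le> exp (2 * real CARD('d) * real k / r) * Z" .
  then show ?thesis using finX XO moments unfolding Z_def MI_def by blast
qed


lemma common_delta:
  assumes "finite \<Phi>" "\<And>\<phi>. \<phi> \<in> \<Phi> \<Longrightarrow> \<exists>\<delta>>0. P \<phi> \<delta>"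
    and mono: "\<And>\<phi> \<delta> \<delta>'. P \<phi> \<delta> \<Longrightarrow> 0 < \<delta>' \<Longrightarrow> \<delta>' \<le> \<delta> \<Longrightarrow> P \<phi> \<delta>'"
  shows "\<exists>\<delta>>(0::real). \<forall>\<phi>\<in>\<Phi>. P \<phi> \<delta>"
  using assms(1,2)
proof (induction \<Phi> rule: finite_induct)
  case empty
  then show ?case by (intro exI[of _ 1]) auto
next
  case (insert \<psi> \<Phi>)
  obtain \<delta>1 where d1: "\<delta>1 > 0" "\<forall>\<phi>\<in>\<Phi>. P \<phi> \<delta>1" using insert by auto
  obtain \<delta>2 where d2: "\<delta>2 > 0" "P \<psi> \<delta>2" using insert by auto
  show ?case using d1 d2 mono by (intro exI[of _ "min \<delta>1 \<delta>2"]) auto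
qed

lemma approx_meas:
  fixes M :: "(real^'d::finite) measure" and \<Phi> :: "(real^'d \<Rightarrow> real) set"
  assumes sets: "sets M = sets (restrict_space borel \<Omega>)" and fin: "finite_measure M" and cpt: "compact \<Omega>"
    and \<Phi>: "finite \<Phi>" "\<And>\<phi>. \<phi> \<in> \<Phi> \<Longrightarrow> continuous_on UNIV \<phi>" and \<epsilon>: "\<epsilon> > 0"
  shows "\<exists>(n::nat) p (c::nat \<Rightarrow> real). (\<forall>i<n. p i \<in> \<Omega> \<and> c i \<ge> 0) \<and> (\<Sum>i<n. c i) = measure M \<Omega> \<and>
            (\<forall>\<phi>\<in>\<Phi>. \<bar>integral\<^sup>L M \<phi> - (\<Sum>i<n. c i * \<phi> (p i))\<bar> \<le> \<epsilon> * measure M \<Omega>)"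
proof -
  interpret finite_measure M by (rule fin)
  have spM: "space M = \<Omega>" using sets_eq_imp_space_eq[OF sets] by (simp add: space_rb)
  have "\<exists>\<delta>>0. \<forall>\<phi>\<in>\<Phi>. \<forall>x\<in>\<Omega>. \<forall>y\<in>\<Omega>. dist y x < \<delta> \<longrightarrow> \<bar>\<phi> y - \<phi> x\<bar> < \<epsilon>"
  proof (rule common_delta[OF \<Phi>(1)])
    fix \<phi> assume "\<phi> \<in> \<Phi>"
    then have "uniformly_continuous_on \<Omega> \<phi>"
      using continuous_on_subset[OF \<Phi>(2) subset_UNIV] cpt by (intro compact_uniformly_continuous) auto
    then obtain d where d: "d > 0" "\<And>x y. x \<in> \<Omega> \<Longrightarrow> y \<in> \<Omega> \<Longrightarrow> dist y x < d \<Longrightarrow> dist (\<phi> y) (\<phi> x) < \<epsilon>"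
      unfolding uniformly_continuous_on_def using \<epsilon> by metis
    show "\<exists>\<delta>>0. \<forall>x\<in>\<Omega>. \<forall>y\<in>\<Omega>. dist y x < \<delta> \<longrightarrow> \<bar>\<phi> y - \<phi> x\<bar> < \<epsilon>"
      using d unfolding dist_real_def by blast
  next
    fix \<phi> and \<delta> \<delta>' :: real
    assume "\<forall>x\<in>\<Omega>. \<forall>y\<in>\<Omega>. dist y x < \<delta> \<longrightarrow> \<bar>\<phi> y - \<phi> x\<bar> < \<epsilon>" "0 < \<delta>'" "\<delta>' \<le> \<delta>"
    then show "\<forall>x\<in>\<Omega>. \<forall>y\<in>\<Omega>. dist y x < \<delta>' \<longrightarrow> \<bar>\<phi> y - \<phi> x\<bar> < \<epsilon>" by force
  qed
  then obtain \<delta> where \<delta>: "\<delta> > 0" "\<And>\<phi> x y. \<phi> \<in> \<Phi> \<Longrightarrow> x \<in> \<Omega> \<Longrightarrow> y \<in> \<Omega> \<Longrightarrow> dist y x < \<delta> \<Longrightarrow> \<bar>\<phi> y - \<phi> x\<bar> < \<epsilon>"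
    by blast
  obtain C where C: "C \<subseteq> \<Omega>" "finite C" "\<Omega> \<subseteq> (\<Union>c\<in>C. ball c \<delta>)"
    using compactE_image[OF cpt, of \<Omega> "\<lambda>c. ball c \<delta>"] \<delta>(1) by force
  obtain cs where cs: "set cs = C" using finite_list[OF C(2)] by blast
  define n where "n = length cs"
  define p where "p i = cs ! i" for i
  define A where "A i = \<Omega> \<inter> (ball (p i) \<delta> - (\<Union>j<i. ball (p j) \<delta>))" for i
  have pO: "p i \<in> \<Omega>" if "i < n" for i using that C(1) cs unfolding p_def n_def by auto
  have AM: "A i \<in> sets M" for i
  proof -
    have "ball (p i) \<delta> - (\<Union>j<i. ball (p j) \<delta>) \<in> sets borel" by auto
    then show ?thesis unfolding sets sets_restrict_space A_def by blast
  qed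
  have AO: "A i \<subseteq> \<Omega>" for i unfolding A_def by auto
  have Ad: "x \<in> A i \<Longrightarrow> dist x (p i) < \<delta>" for x i unfolding A_def by (auto simp: dist_commute)
  have disj: "disjoint_family_on A {..<n}"
    unfolding disjoint_family_on_def A_def by (auto elim!: nat_neq_iff[THEN iffD1, elim_format])
  have cover: "\<exists>i<n. x \<in> A i" if x: "x \<in> \<Omega>" for x
  proof -
    obtain c0 where c0: "c0 \<in> set cs" "x \<in> ball c0 \<delta>" using C(3) x cs by auto
    then obtain i where "i < length cs" "cs ! i = c0" by (auto simp: in_set_conv_nth)
    then have "\<exists>i. i < n \<and> x \<in> ball (p i) \<delta>" using c0 unfolding p_def n_def by blast
    then obtain i where i: "i < n" "x \<in> ball (p i) \<delta>" "\<And>j. j < i \<Longrightarrow> \<not> (j < n \<and> x \<in> ball (p j) \<delta>)"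
      using exists_least_iff[of "\<lambda>i. i < n \<and> x \<in> ball (p i) \<delta>"] by blast
    then have "x \<in> A i" using x unfolding A_def by auto
    then show ?thesis using i by blast
  qed
  have unique: "x \<in> A i \<Longrightarrow> x \<in> A j \<Longrightarrow> i = j" for x i j
    unfolding A_def by (cases i j rule: linorder_cases) auto
  define c where "c i = measure M (A i)" for i
  have c0: "c i \<ge> 0" for i unfolding c_def by simp
  have UA: "(\<Union>i<n. A i) = \<Omega>" using cover AO by blast
  have csum: "(\<Sum>i<n. c i) = measure M \<Omega>"
    unfolding c_def UA[symmetric] using AM disj by (intro finite_measure_finite_Union[symmetric]) auto
  have main: "\<bar>integral\<^sup>L M \<phi> - (\<Sum>i<n. c i * \<phi> (p i))\<bar> \<le> \<epsilon> * measure M \<Omega>" if \<phi>: "\<phi> \<in> \<Phi>" for \<phi>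
  proof -
    have "compact (\<phi> ` \<Omega>)" using continuous_on_subset[OF \<Phi>(2)[OF \<phi>] subset_UNIV] cpt by (intro compact_continuous_image) auto
    then obtain B where B: "\<And>x. x \<in> \<Omega> \<Longrightarrow> \<bar>\<phi> x\<bar> \<le> B"
      using compact_imp_bounded bounded_real by (metis image_eqI)
    have meas: "\<phi> \<in> borel_measurable M"
      using measurable_restrict_space1[OF borel_measurable_continuous_onI[OF \<Phi>(2)[OF \<phi>]], of \<Omega>]
      by (simp add: measurable_cong_sets[OF sets refl])
    have intA: "integrable M (\<lambda>x. indicator (A i) x * \<phi> x)" for i
    proof (rule integrable_const_bound[where B=B])
      show "AE x in M. norm (indicator (A i) x * \<phi> x) \<le> B"
        using B spM by (intro AE_I2) (auto simp: indicator_def intro: order.trans[OF abs_ge_zero B])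
      show "(\<lambda>x. indicator (A i) x * \<phi> x) \<in> borel_measurable M" using meas AM by measurable
    qed
    have intAc: "integrable M (\<lambda>x. indicator (A i) x * C)" for i and C :: real
    proof (rule integrable_const_bound[where B="\<bar>C\<bar>"])
      show "AE x in M. norm (indicator (A i) x * C) \<le> \<bar>C\<bar>" by (intro AE_I2) (auto simp: indicator_def)
      show "(\<lambda>x. indicator (A i) x * C) \<in> borel_measurable M" using AM by measurable
    qed
    have "integral\<^sup>L M \<phi> = integral\<^sup>L M (\<lambda>x. \<Sum>i<n. indicator (A i) x * \<phi> x)"
    proof (rule Bochner_Integration.integral_cong[OF refl])
      fix x assume "x \<in> space M"
      then obtain i0 where i0: "i0 < n" "x \<in> A i0" using cover spM by auto
      have "(\<Sum>i<n. indicator (A i) x * \<phi> x) = (\<Sum>i<n. if i = i0 then \<phi> x else 0)"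
        using i0 unique by (intro sum.cong refl) (auto simp: indicator_def)
      then show "\<phi> x = (\<Sum>i<n. indicator (A i) x * \<phi> x)" using i0 by simp
    qed
    also have "\<dots> = (\<Sum>i<n. integral\<^sup>L M (\<lambda>x. indicator (A i) x * \<phi> x))"
      by (rule Bochner_Integration.integral_sum) (rule intA)
    finally have e1: "integral\<^sup>L M \<phi> - (\<Sum>i<n. c i * \<phi> (p i)) =
        (\<Sum>i<n. integral\<^sup>L M (\<lambda>x. indicator (A i) x * \<phi> x) - c i * \<phi> (p i))"
      by (simp add: sum_subtractf)
    have each: "\<bar>integral\<^sup>L M (\<lambda>x. indicator (A i) x * \<phi> x) - c i * \<phi> (p i)\<bar> \<le> \<epsilon> * c i" if i: "i < n" for i
    proof -
      have ci: "c i * \<phi> (p i) = integral\<^sup>L M (\<lambda>x. indicator (A i) x * \<phi> (p i))"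
        unfolding c_def using AO[of i] spM by (simp add: Int_absorb2)
      have "integral\<^sup>L M (\<lambda>x. indicator (A i) x * \<phi> x) - c i * \<phi> (p i) =
            integral\<^sup>L M (\<lambda>x. indicator (A i) x * \<phi> x - indicator (A i) x * \<phi> (p i))"
        unfolding ci by (rule Bochner_Integration.integral_diff[symmetric]) (rule intA, rule intAc)
      also have "\<bar>\<dots>\<bar> \<le> integral\<^sup>L M (\<lambda>x. indicator (A i) x * \<epsilon>)"
      proof (rule integral_abs_bound_integral)
        show "integrable M (\<lambda>x. indicator (A i) x * \<phi> x - indicator (A i) x * \<phi> (p i))"
          by (auto intro: intA intAc)
        show "integrable M (\<lambda>x. indicator (A i) x * \<epsilon>)" by (rule intAc)
        fix x assume "x \<in> space M"
        show "\<bar>indicator (A i) x * \<phi> x - indicator (A i) x * \<phi> (p i)\<bar> \<le> indicator (A i) x * \<epsilon>"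
        proof (cases "x \<in> A i")
          case True
          have "\<bar>\<phi> x - \<phi> (p i)\<bar> < \<epsilon>"
            using \<delta>(2)[OF \<phi> pO[OF i], of x] True AO Ad by auto
          then show ?thesis using True by simp
        qed simp
      qed
      also have "integral\<^sup>L M (\<lambda>x. indicator (A i) x * \<epsilon>) = \<epsilon> * c i"
        unfolding c_def using AO[of i] spM by (simp add: Int_absorb2)
      finally show ?thesis .
    qed
    have "\<bar>integral\<^sup>L M \<phi> - (\<Sum>i<n. c i * \<phi> (p i))\<bar> \<le> (\<Sum>i<n. \<epsilon> * c i)"
      unfolding e1 by (rule order.trans[OF sum_abs sum_mono]) (rule each; simp)
    also have "\<dots> = \<epsilon> * measure M \<Omega>" by (simp add: sum_distrib_left[symmetric] csum)
    finally show ?thesis .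
  qed
  show ?thesis by (intro exI[of _ n] exI[of _ p] exI[of _ c]) (use pO c0 csum main in auto)
qed


lemma lin_dep:
  fixes v :: "'i \<Rightarrow> 'a \<Rightarrow> real"
  assumes "finite S" "finite I" "card I > card S"
  shows "\<exists>\<beta>. (\<exists>i\<in>I. \<beta> i \<noteq> 0) \<and> (\<forall>\<alpha>\<in>S. (\<Sum>i\<in>I. \<beta> i * v i \<alpha>) = 0)"
  using assms
proof (induction S arbitrary: I v rule: finite_induct)
  case empty
  then obtain i where "i \<in> I" by (metis card.empty card_gt_0_iff ex_in_conv)
  then show ?case by (intro exI[of _ "\<lambda>_. 1"]) auto
next
  case (insert s S)
  show ?case
  proof (cases "\<forall>i\<in>I. v i s = 0")
    case True
    obtain \<beta> where \<beta>: "\<exists>i\<in>I. \<beta> i \<noteq> 0" "\<forall>\<alpha>\<in>S. (\<Sum>i\<in>I. \<beta> i * v i \<alpha>) = 0"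
      using insert.IH[of I v] insert.prems insert.hyps by auto
    show ?thesis using \<beta> True by (intro exI[of _ \<beta>]) auto
  next
    case False
    then obtain i0 where i0: "i0 \<in> I" "v i0 s \<noteq> 0" by auto
    define I0 where "I0 = I - {i0}"
    define w where "w i \<alpha> = v i \<alpha> - (v i s / v i0 s) * v i0 \<alpha>" for i \<alpha>
    have cI0: "card I0 > card S" using insert.prems insert.hyps i0 unfolding I0_def by (simp add: card_Diff_singleton)
    obtain \<gamma> where \<gamma>: "\<exists>i\<in>I0. \<gamma> i \<noteq> 0" "\<forall>\<alpha>\<in>S. (\<Sum>i\<in>I0. \<gamma> i * w i \<alpha>) = 0"
      using insert.IH[OF _ cI0, of w] insert.prems unfolding I0_def by auto
    define \<beta> where "\<beta> i = (if i = i0 then - (\<Sum>j\<in>I0. \<gamma> j * v j s) / v i0 s else \<gamma> i)" for i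
    have fI0: "finite I0" using insert.prems unfolding I0_def by simp
    have split: "(\<Sum>i\<in>I. \<beta> i * v i \<alpha>) = \<beta> i0 * v i0 \<alpha> + (\<Sum>i\<in>I0. \<gamma> i * v i \<alpha>)" for \<alpha>
    proof -
      have "(\<Sum>i\<in>I. \<beta> i * v i \<alpha>) = \<beta> i0 * v i0 \<alpha> + (\<Sum>i\<in>I0. \<beta> i * v i \<alpha>)"
        unfolding I0_def using i0 insert.prems by (simp add: sum.remove)
      moreover have "(\<Sum>i\<in>I0. \<beta> i * v i \<alpha>) = (\<Sum>i\<in>I0. \<gamma> i * v i \<alpha>)"
        unfolding I0_def \<beta>_def by (intro sum.cong) auto
      ultimately show ?thesis by simp
    qed
    have all: "(\<Sum>i\<in>I. \<beta> i * v i \<alpha>) = 0" if "\<alpha> \<in> insert s S" for \<alpha>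
    proof (cases "\<alpha> = s")
      case True
      then show ?thesis unfolding split using i0 by (simp add: \<beta>_def)
    next
      case False
      then have a: "\<alpha> \<in> S" using that by auto
      have "(\<Sum>i\<in>I0. \<gamma> i * w i \<alpha>) = (\<Sum>i\<in>I0. \<gamma> i * v i \<alpha>) - (\<Sum>i\<in>I0. \<gamma> i * v i s) / v i0 s * v i0 \<alpha>"
      proof -
        have "(\<Sum>i\<in>I0. \<gamma> i * w i \<alpha>) = (\<Sum>i\<in>I0. \<gamma> i * v i \<alpha> - (\<gamma> i * v i s) * (v i0 \<alpha> / v i0 s))"
          unfolding w_def by (intro sum.cong refl) (simp add: algebra_simps)
        also have "\<dots> = (\<Sum>i\<in>I0. \<gamma> i * v i \<alpha>) - (\<Sum>i\<in>I0. \<gamma> i * v i s) * (v i0 \<alpha> / v i0 s)"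
          by (simp only: sum_subtractf sum_distrib_right)
        finally show ?thesis by (simp add: algebra_simps)
      qed
      then show ?thesis unfolding split using \<gamma>(2) a i0 by (simp add: \<beta>_def algebra_simps)
    qed
    have "\<exists>i\<in>I. \<beta> i \<noteq> 0" using \<gamma>(1) unfolding I0_def \<beta>_def by auto
    then show ?thesis using all by blast
  qed
qed

lemma sgn_times_self: "sgn (x::real) * x = \<bar>x\<bar>"
  by (cases rule: linorder_cases[of x 0]) auto

lemma sgn_e_expand: "sgn (c::real) * (c + t * d) = \<bar>c\<bar> + t * (sgn c * d)"
  by (simp add: distrib_left sgn_times_self mult.left_commute)

lemma carath:
  fixes v :: "'i \<Rightarrow> 'a \<Rightarrow> real"
  assumes "finite I" "finite S"
  shows "\<exists>J c'. J \<subseteq> I \<and> card J \<le> card S \<and> (\<Sum>i\<in>J. \<bar>c' i\<bar>) \<le> (\<Sum>i\<in>I. \<bar>c i\<bar>) \<and>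
           (\<forall>\<alpha>\<in>S. (\<Sum>i\<in>J. c' i * v i \<alpha>) = (\<Sum>i\<in>I. c i * v i \<alpha>))"
  using assms(1)
proof (induction I arbitrary: c rule: finite_psubset_induct)
  case (psubset I)
  note fin = psubset.hyps(1)
  have drop: "\<exists>J c'. J \<subseteq> I \<and> card J \<le> card S \<and> (\<Sum>i\<in>J. \<bar>c' i\<bar>) \<le> (\<Sum>i\<in>I. \<bar>e i\<bar>) \<and>
           (\<forall>\<alpha>\<in>S. (\<Sum>i\<in>J. c' i * v i \<alpha>) = (\<Sum>i\<in>I. e i * v i \<alpha>))"
    if i0: "i0 \<in> I" "e i0 = 0" for e i0
  proof -
    obtain J c' where J: "J \<subseteq> I - {i0}" "card J \<le> card S" "(\<Sum>i\<in>J. \<bar>c' i\<bar>) \<le> (\<Sum>i\<in>I - {i0}. \<bar>e i\<bar>)"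
      "\<forall>\<alpha>\<in>S. (\<Sum>i\<in>J. c' i * v i \<alpha>) = (\<Sum>i\<in>I - {i0}. e i * v i \<alpha>)"
      using psubset.IH[of "I - {i0}" e] i0 by blast
    have "(\<Sum>i\<in>I. \<bar>e i\<bar>) = (\<Sum>i\<in>I - {i0}. \<bar>e i\<bar>)" using i0 fin by (simp add: sum.remove)
    moreover have "(\<Sum>i\<in>I. e i * v i \<alpha>) = (\<Sum>i\<in>I - {i0}. e i * v i \<alpha>)" for \<alpha> using i0 fin by (simp add: sum.remove)
    ultimately show ?thesis using J by (intro exI[of _ J] exI[of _ c']) auto
  qed
  show ?case
  proof (cases "card I \<le> card S")
    case True
    then show ?thesis by (intro exI[of _ I] exI[of _ c]) auto
  next
    case big: False
    show ?thesis
    proof (cases "\<exists>i0\<in>I. c i0 = 0")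
      case True
      then show ?thesis using drop by blast
    next
      case False
      then have cnz: "\<And>i. i \<in> I \<Longrightarrow> c i \<noteq> 0" by auto
      obtain \<beta> where \<beta>: "\<exists>i\<in>I. \<beta> i \<noteq> 0" "\<forall>\<alpha>\<in>S. (\<Sum>i\<in>I. \<beta> i * v i \<alpha>) = 0"
        using lin_dep[OF assms(2) fin, of v] big by auto
      define d where "d = (if (\<Sum>i\<in>I. sgn (c i) * \<beta> i) \<le> 0 then \<beta> else (\<lambda>i. - \<beta> i))"
      have dnz: "\<exists>i\<in>I. d i \<noteq> 0" using \<beta>(1) unfolding d_def by auto
      have dmom: "\<forall>\<alpha>\<in>S. (\<Sum>i\<in>I. d i * v i \<alpha>) = 0" using \<beta>(2) unfolding d_def by (auto simp: sum_negf)
      have dsg: "(\<Sum>i\<in>I. sgn (c i) * d i) \<le> 0" unfolding d_def by (auto simp: sum_negf)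
      define Neg where "Neg = {i\<in>I. sgn (c i) * d i < 0}"
      have Negne: "Neg \<noteq> {}"
      proof
        assume "Neg = {}"
        then have nn: "\<And>i. i \<in> I \<Longrightarrow> sgn (c i) * d i \<ge> 0" unfolding Neg_def by force
        have s0: "(\<Sum>i\<in>I. sgn (c i) * d i) = 0" using dsg sum_nonneg[of I "\<lambda>i. sgn (c i) * d i", OF nn] by linarith
        then have "\<And>i. i \<in> I \<Longrightarrow> sgn (c i) * d i = 0"
          using sum_nonneg_eq_0_iff[OF fin, of "\<lambda>i. sgn (c i) * d i"] nn by blast
        then have "\<And>i. i \<in> I \<Longrightarrow> d i = 0" using cnz by (simp add: sgn_zero_iff)
        then show False using dnz by blast
      qed
      have finNeg: "finite Neg" using fin unfolding Neg_def by simp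
      define q where "q i = \<bar>c i\<bar> / \<bar>d i\<bar>" for i
      have "Min (q ` Neg) \<in> q ` Neg" using finNeg Negne by (intro Min_in) auto
      then obtain i0 where i0: "i0 \<in> Neg" "q i0 = Min (q ` Neg)" by (metis imageE)
      define t where "t = q i0"
      have i0I: "i0 \<in> I" using i0 unfolding Neg_def by auto
      have tle: "t \<le> q i" if "i \<in> Neg" for i unfolding t_def i0(2) using finNeg that by simp
      have t0: "t \<ge> 0" unfolding t_def q_def by simp
      define e where "e i = c i + t * d i" for i
      have sgn_e: "sgn (c i) * e i \<ge> 0" if i: "i \<in> I" for i
      proof (cases "i \<in> Neg")
        case True
        then have neg: "sgn (c i) * d i < 0" unfolding Neg_def by auto
        then have dnz: "d i \<noteq> 0" by auto
        have sd: "sgn (c i) * d i = - \<bar>d i\<bar>" using neg cnz[OF i]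
          by (cases "c i > 0"; cases "d i > 0") (auto simp: sgn_if)
        have "t * \<bar>d i\<bar> \<le> q i * \<bar>d i\<bar>" using tle[OF True] by (simp add: mult_right_mono)
        also have "\<dots> = \<bar>c i\<bar>" unfolding q_def using dnz by simp
        finally have "t * \<bar>d i\<bar> \<le> \<bar>c i\<bar>" .
        then show ?thesis unfolding e_def sgn_e_expand sd by simp
      next
        case False
        then have "sgn (c i) * d i \<ge> 0" using i unfolding Neg_def by auto
        then show ?thesis unfolding e_def sgn_e_expand using t0 by simp
      qed
      have abs_e: "\<bar>e i\<bar> = sgn (c i) * e i" if i: "i \<in> I" for i
        using sgn_e[OF i] cnz[OF i] by (cases "c i > 0") (auto simp: sgn_if)
      have e0: "e i0 = 0"
      proof -
        have "sgn (c i0) * d i0 < 0" using i0(1) unfolding Neg_def by auto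
        then have "d i0 \<noteq> 0" "c i0 * d i0 < 0" using cnz[OF i0I]
          by (auto simp: sgn_if mult_less_0_iff split: if_splits)
        then show ?thesis unfolding e_def t_def q_def
          by (cases "c i0 > 0") (auto simp: field_simps abs_if mult_less_0_iff)
      qed
      have sum_e: "(\<Sum>i\<in>I. \<bar>e i\<bar>) \<le> (\<Sum>i\<in>I. \<bar>c i\<bar>)"
      proof -
        have "(\<Sum>i\<in>I. \<bar>e i\<bar>) = (\<Sum>i\<in>I. \<bar>c i\<bar> + t * (sgn (c i) * d i))"
          using abs_e unfolding e_def by (intro sum.cong refl) (simp add: sgn_e_expand)
        also have "\<dots> = (\<Sum>i\<in>I. \<bar>c i\<bar>) + t * (\<Sum>i\<in>I. sgn (c i) * d i)"
          by (simp only: sum.distrib sum_distrib_left)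
        also have "\<dots> \<le> (\<Sum>i\<in>I. \<bar>c i\<bar>)" using t0 dsg by (simp add: mult_nonneg_nonpos)
        finally show ?thesis .
      qed
      have mom_e: "(\<Sum>i\<in>I. e i * v i \<alpha>) = (\<Sum>i\<in>I. c i * v i \<alpha>)" if "\<alpha> \<in> S" for \<alpha>
      proof -
        have "(\<Sum>i\<in>I. e i * v i \<alpha>) = (\<Sum>i\<in>I. c i * v i \<alpha> + t * (d i * v i \<alpha>))"
          unfolding e_def by (intro sum.cong refl) (simp add: distrib_right)
        also have "\<dots> = (\<Sum>i\<in>I. c i * v i \<alpha>) + t * (\<Sum>i\<in>I. d i * v i \<alpha>)"
          by (simp only: sum.distrib sum_distrib_left)
        finally have "(\<Sum>i\<in>I. e i * v i \<alpha>) = (\<Sum>i\<in>I. c i * v i \<alpha>) + t * (\<Sum>i\<in>I. d i * v i \<alpha>)" .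
        then show ?thesis using dmom that by simp
      qed
      obtain J c' where J: "J \<subseteq> I" "card J \<le> card S" "(\<Sum>i\<in>J. \<bar>c' i\<bar>) \<le> (\<Sum>i\<in>I. \<bar>e i\<bar>)"
        "\<forall>\<alpha>\<in>S. (\<Sum>i\<in>J. c' i * v i \<alpha>) = (\<Sum>i\<in>I. e i * v i \<alpha>)"
        using drop[of i0 e, OF i0I e0] by blast
      show ?thesis using J sum_e mom_e by (intro exI[of _ J] exI[of _ c']) auto
    qed
  qed
qed


lemma seq_extract:
  fixes f :: "nat \<Rightarrow> nat \<Rightarrow> 'a::metric_space"
  assumes K: "compact K" and f: "\<And>n i. i < N \<Longrightarrow> f n i \<in> K"
  shows "\<exists>r l. strict_mono r \<and> (\<forall>i<N. l i \<in> K \<and> (\<lambda>n. f (r n) i) \<longlonglongrightarrow> l i)"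
  using f
proof (induction N)
  case 0
  show ?case by (intro exI[of _ id]) (auto simp: strict_mono_def)
next
  case (Suc N)
  obtain r l where r: "strict_mono r" "\<And>i. i < N \<Longrightarrow> l i \<in> K \<and> (\<lambda>n. f (r n) i) \<longlonglongrightarrow> l i"
    using Suc.IH Suc.prems by (metis less_SucI)
  have "\<forall>n. f (r n) N \<in> K" using Suc.prems by simp
  then obtain l' r' where r': "l' \<in> K" "strict_mono r'" "((\<lambda>n. f (r n) N) \<circ> r') \<longlonglongrightarrow> l'"
    using seq_compactE[OF compact_imp_seq_compact[OF K]] by metis
  define l2 where "l2 i = (if i = N then l' else l i)" for i
  have "strict_mono (r \<circ> r')" using r(1) r'(2) by (rule strict_mono_o)
  moreover have "l2 i \<in> K \<and> (\<lambda>n. f ((r \<circ> r') n) i) \<longlonglongrightarrow> l2 i" if "i < Suc N" for i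
  proof (cases "i = N")
    case True
    then show ?thesis using r' by (simp add: l2_def o_def)
  next
    case False
    then have i: "i < N" using that by simp
    have "((\<lambda>n. f (r n) i) \<circ> r') \<longlonglongrightarrow> l i" using r(2)[OF i] r'(2) by (rule LIMSEQ_subseq_LIMSEQ[OF conjunct2])
    then show ?thesis using False r(2)[OF i] by (simp add: l2_def o_def)
  qed
  ultimately show ?case by blast
qed

lemma sum_concat: "(\<Sum>i<a + b. f i) = (\<Sum>i<a. f i) + (\<Sum>i<b. f (a + i :: nat))"
  by (induction b) (simp_all add: add.assoc)

lemma atoms_sam:
  fixes p :: "'i \<Rightarrow> real^'d::finite" and c :: "'i \<Rightarrow> real"
  assumes I: "finite I" and p: "\<And>i. i \<in> I \<Longrightarrow> p i \<in> \<Omega>"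
  shows "\<exists>X W. finite X \<and> X \<subseteq> \<Omega> \<and> (\<forall>g. (\<Sum>x\<in>X. W x * g x) = (\<Sum>i\<in>I. c i * g (p i))) \<and>
              (\<Sum>x\<in>X. \<bar>W x\<bar>) \<le> (\<Sum>i\<in>I. \<bar>c i\<bar>)"
proof -
  define X where "X = p ` I"
  define W where "W x = (\<Sum>i\<in>{i\<in>I. p i = x}. c i)" for x
  have "(\<Sum>x\<in>X. W x * g x) = (\<Sum>i\<in>I. c i * g (p i))" for g
  proof -
    have "(\<Sum>i\<in>I. c i * g (p i)) = (\<Sum>x\<in>X. \<Sum>i\<in>{i\<in>I. p i = x}. c i * g (p i))"
      unfolding X_def by (rule sum.image_gen[OF I])
    also have "\<dots> = (\<Sum>x\<in>X. W x * g x)"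
      unfolding W_def
    proof (intro sum.cong refl)
      fix x
      have "(\<Sum>i\<in>{i\<in>I. p i = x}. c i * g (p i)) = (\<Sum>i\<in>{i\<in>I. p i = x}. c i * g x)"
        by (rule sum.cong) auto
      then show "(\<Sum>i\<in>{i\<in>I. p i = x}. c i * g (p i)) = (\<Sum>i\<in>{i\<in>I. p i = x}. c i) * g x"
        by (simp add: sum_distrib_right)
    qed
    finally show ?thesis by simp
  qed
  moreover have "(\<Sum>x\<in>X. \<bar>W x\<bar>) \<le> (\<Sum>i\<in>I. \<bar>c i\<bar>)"
  proof -
    have "(\<Sum>x\<in>X. \<bar>W x\<bar>) \<le> (\<Sum>x\<in>X. \<Sum>i\<in>{i\<in>I. p i = x}. \<bar>c i\<bar>)"
      unfolding W_def by (intro sum_mono sum_abs)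
    also have "\<dots> = (\<Sum>i\<in>I. \<bar>c i\<bar>)"
      unfolding X_def by (rule sum.image_gen[OF I, symmetric])
    finally show ?thesis .
  qed
  ultimately show ?thesis using I p unfolding X_def by blast
qed


lemma tv_nonneg: "tv_norm \<Omega> \<mu> \<ge> 0"
  unfolding tv_norm_def by simp

lemma approx_signed:
  fixes \<mu> :: "(real^'d::finite) measure \<times> (real^'d) measure" and k :: nat
  assumes sm: "signed_measure_on \<Omega> \<mu>" and cpt: "compact \<Omega>" and \<epsilon>: "\<epsilon> > 0"
  shows "\<exists>(n::nat) p (c::nat \<Rightarrow> real). (\<forall>i<n. p i \<in> \<Omega>) \<and> (\<Sum>i<n. \<bar>c i\<bar>) \<le> tv_norm \<Omega> \<mu> \<and>
     (\<forall>\<alpha>\<in>multi_indices k. \<bar>signed_integral \<mu> (monomial \<alpha>) - (\<Sum>i<n. c i * monomial \<alpha> (p i))\<bar> \<le> \<epsilon>)"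
proof -
  define \<Phi> where "\<Phi> = monomial ` (multi_indices k :: ('d \<Rightarrow> nat) set)"
  have \<Phi>: "finite \<Phi>" "\<And>\<phi>. \<phi> \<in> \<Phi> \<Longrightarrow> continuous_on UNIV \<phi>"
    unfolding \<Phi>_def using MI_finite monomial_cont by auto
  define \<epsilon>' where "\<epsilon>' = \<epsilon> / (tv_norm \<Omega> \<mu> + 1)"
  have \<epsilon>': "\<epsilon>' > 0" unfolding \<epsilon>'_def using \<epsilon> tv_nonneg[of \<Omega> \<mu>] by simp
  have s1: "sets (fst \<mu>) = sets (restrict_space borel \<Omega>)" "finite_measure (fst \<mu>)"
    and s2: "sets (snd \<mu>) = sets (restrict_space borel \<Omega>)" "finite_measure (snd \<mu>)"
    using sm unfolding signed_measure_on_def by auto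
  have "\<exists>(n::nat) p (c::nat \<Rightarrow> real). (\<forall>i<n. p i \<in> \<Omega> \<and> c i \<ge> 0) \<and> (\<Sum>i<n. c i) = measure (fst \<mu>) \<Omega> \<and>
            (\<forall>\<phi>\<in>\<Phi>. \<bar>integral\<^sup>L (fst \<mu>) \<phi> - (\<Sum>i<n. c i * \<phi> (p i))\<bar> \<le> \<epsilon>' * measure (fst \<mu>) \<Omega>)"
    using s1 cpt \<Phi> \<epsilon>' by (rule approx_meas)
  then obtain n1 :: nat and p1 and c1 :: "nat \<Rightarrow> real" where A1: "\<forall>i<n1. p1 i \<in> \<Omega> \<and> c1 i \<ge> 0" "(\<Sum>i<n1. c1 i) = measure (fst \<mu>) \<Omega>"
    "\<forall>\<phi>\<in>\<Phi>. \<bar>integral\<^sup>L (fst \<mu>) \<phi> - (\<Sum>i<n1. c1 i * \<phi> (p1 i))\<bar> \<le> \<epsilon>' * measure (fst \<mu>) \<Omega>"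
    by blast
  have "\<exists>(n::nat) p (c::nat \<Rightarrow> real). (\<forall>i<n. p i \<in> \<Omega> \<and> c i \<ge> 0) \<and> (\<Sum>i<n. c i) = measure (snd \<mu>) \<Omega> \<and>
            (\<forall>\<phi>\<in>\<Phi>. \<bar>integral\<^sup>L (snd \<mu>) \<phi> - (\<Sum>i<n. c i * \<phi> (p i))\<bar> \<le> \<epsilon>' * measure (snd \<mu>) \<Omega>)"
    using s2 cpt \<Phi> \<epsilon>' by (rule approx_meas)
  then obtain n2 :: nat and p2 and c2 :: "nat \<Rightarrow> real" where A2: "\<forall>i<n2. p2 i \<in> \<Omega> \<and> c2 i \<ge> 0" "(\<Sum>i<n2. c2 i) = measure (snd \<mu>) \<Omega>"
    "\<forall>\<phi>\<in>\<Phi>. \<bar>integral\<^sup>L (snd \<mu>) \<phi> - (\<Sum>i<n2. c2 i * \<phi> (p2 i))\<bar> \<le> \<epsilon>' * measure (snd \<mu>) \<Omega>"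
    by blast
  define n where "n = n1 + n2"
  define p where "p i = (if i < n1 then p1 i else p2 (i - n1))" for i
  define c where "c i = (if i < n1 then c1 i else - c2 (i - n1))" for i
  have sumc: "(\<Sum>i<n. f i) = (\<Sum>i<n1. f i) + (\<Sum>i<n2. f (n1 + i))" for f :: "nat \<Rightarrow> real"
    unfolding n_def by (rule sum_concat)
  have pO: "\<forall>i<n. p i \<in> \<Omega>" unfolding p_def n_def using A1(1) A2(1) by auto
  have "(\<Sum>i<n. \<bar>c i\<bar>) = (\<Sum>i<n1. c1 i) + (\<Sum>i<n2. c2 i)"
    unfolding sumc c_def using A1(1) A2(1) by simp
  also have "\<dots> = tv_norm \<Omega> \<mu>" unfolding A1(2) A2(2) tv_norm_def ..
  finally have tvb: "(\<Sum>i<n. \<bar>c i\<bar>) \<le> tv_norm \<Omega> \<mu>" by simp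
  have err: "\<bar>signed_integral \<mu> (monomial \<alpha>) - (\<Sum>i<n. c i * monomial \<alpha> (p i))\<bar> \<le> \<epsilon>"
    if \<alpha>: "\<alpha> \<in> multi_indices k" for \<alpha>
  proof -
    have ph: "monomial \<alpha> \<in> \<Phi>" unfolding \<Phi>_def using \<alpha> by simp
    have sp: "(\<Sum>i<n. c i * monomial \<alpha> (p i)) = (\<Sum>i<n1. c1 i * monomial \<alpha> (p1 i)) - (\<Sum>i<n2. c2 i * monomial \<alpha> (p2 i))"
      unfolding sumc c_def p_def by (simp add: sum_negf)
    have "\<bar>signed_integral \<mu> (monomial \<alpha>) - (\<Sum>i<n. c i * monomial \<alpha> (p i))\<bar> \<le>
          \<epsilon>' * measure (fst \<mu>) \<Omega> + \<epsilon>' * measure (snd \<mu>) \<Omega>"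
      unfolding signed_integral_def sp using A1(3) A2(3) ph by fastforce
    also have "\<dots> = \<epsilon>' * tv_norm \<Omega> \<mu>" unfolding tv_norm_def by (simp add: algebra_simps)
    also have "\<dots> \<le> \<epsilon>" unfolding \<epsilon>'_def using \<epsilon> tv_nonneg[of \<Omega> \<mu>] by (simp add: field_simps)
    finally show ?thesis .
  qed
  show ?thesis using pO tvb err by blast
qed

lemma approx_N:
  fixes \<mu> :: "(real^'d::finite) measure \<times> (real^'d) measure" and k :: nat
  assumes sm: "signed_measure_on \<Omega> \<mu>" and cpt: "compact \<Omega>" and \<epsilon>: "\<epsilon> > 0" and p0: "p0 \<in> \<Omega>"
  shows "\<exists>P (C::nat \<Rightarrow> real). (\<forall>i<card (multi_indices k :: ('d \<Rightarrow> nat) set). P i \<in> \<Omega>) \<and>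
     (\<Sum>i<card (multi_indices k :: ('d \<Rightarrow> nat) set). \<bar>C i\<bar>) \<le> tv_norm \<Omega> \<mu> \<and>
     (\<forall>\<alpha>\<in>multi_indices k. \<bar>signed_integral \<mu> (monomial \<alpha>) - (\<Sum>i<card (multi_indices k :: ('d \<Rightarrow> nat) set). C i * monomial \<alpha> (P i))\<bar> \<le> \<epsilon>)"
proof -
  define MI where "MI = (multi_indices k :: ('d \<Rightarrow> nat) set)"
  define N where "N = card MI"
  obtain n :: nat and p and c :: "nat \<Rightarrow> real" where A: "\<forall>i<(n::nat). p i \<in> \<Omega>" "(\<Sum>i<n. \<bar>c i\<bar>) \<le> tv_norm \<Omega> \<mu>"
    "\<forall>\<alpha>\<in>MI. \<bar>signed_integral \<mu> (monomial \<alpha>) - (\<Sum>i<n. c i * monomial \<alpha> (p i))\<bar> \<le> \<epsilon>"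
    using approx_signed[OF sm cpt \<epsilon>, of k] unfolding MI_def by blast
  obtain J c' where J: "J \<subseteq> {..<n}" "card J \<le> card MI" "(\<Sum>i\<in>J. \<bar>c' i\<bar>) \<le> (\<Sum>i<n. \<bar>c i\<bar>)"
    "\<forall>\<alpha>\<in>MI. (\<Sum>i\<in>J. c' i * monomial \<alpha> (p i)) = (\<Sum>i<n. c i * monomial \<alpha> (p i))"
    using carath[of "{..<n}" MI c "\<lambda>i \<alpha>. monomial \<alpha> (p i)"] MI_finite unfolding MI_def by auto
  have finJ: "finite J" using J(1) finite_subset by blast
  obtain h where h: "bij_betw h {0..<card J} J" using ex_bij_betw_nat_finite[OF finJ] by blast
  define P where "P i = (if i < card J then p (h i) else p0)" for i
  define C where "C i = (if i < card J then c' (h i) else 0)" for i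
  have red: "(\<Sum>i<N. f i) = (\<Sum>i\<in>J. g i)" if "\<And>i. i < card J \<Longrightarrow> f i = g (h i)" "\<And>i. i \<ge> card J \<Longrightarrow> f i = 0" for f g :: "nat \<Rightarrow> real"
  proof -
    have "(\<Sum>i<N. f i) = (\<Sum>i<card J. f i)"
      using J(2) that(2) unfolding N_def by (intro sum.mono_neutral_right) auto
    also have "\<dots> = (\<Sum>i\<in>{0..<card J}. g (h i))" using that(1) by (simp add: lessThan_atLeast0)
    also have "\<dots> = (\<Sum>i\<in>J. g i)" by (rule sum.reindex_bij_betw[OF h])
    finally show ?thesis .
  qed
  have PO: "\<forall>i<N. P i \<in> \<Omega>"
  proof (intro allI impI)
    fix i assume "i < N"
    show "P i \<in> \<Omega>"
    proof (cases "i < card J")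
      case True
      then have "h i \<in> J" using h by (auto simp: bij_betw_def)
      then show ?thesis unfolding P_def using True J(1) A(1) by auto
    qed (simp add: P_def p0)
  qed
  have "(\<Sum>i<N. \<bar>C i\<bar>) = (\<Sum>i\<in>J. \<bar>c' i\<bar>)" by (rule red) (auto simp: C_def)
  then have tvb: "(\<Sum>i<N. \<bar>C i\<bar>) \<le> tv_norm \<Omega> \<mu>" using J(3) A(2) by linarith
  have mom: "(\<Sum>i<N. C i * monomial \<alpha> (P i)) = (\<Sum>i<n. c i * monomial \<alpha> (p i))" if "\<alpha> \<in> MI" for \<alpha>
  proof -
    have "(\<Sum>i<N. C i * monomial \<alpha> (P i)) = (\<Sum>i\<in>J. c' i * monomial \<alpha> (p i))" by (rule red) (auto simp: C_def P_def)
    then show ?thesis using J(4) that by simp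
  qed
  show ?thesis using PO tvb mom A(3) unfolding N_def MI_def by (intro exI[of _ P] exI[of _ C]) auto
qed


lemma sam_in_F:
  assumes X: "finite X" "X \<subseteq> \<Omega>" and mom: "\<And>\<alpha>. \<alpha> \<in> multi_indices k \<Longrightarrow> (\<Sum>x\<in>X. W x * monomial \<alpha> x) = z \<alpha>"
  shows "signed_measure_on \<Omega> (sam \<Omega> X W) \<and> (\<forall>\<alpha>\<in>multi_indices k. signed_integral (sam \<Omega> X W) (monomial \<alpha>) = z \<alpha>)"
  using sam_signed[OF X] sam_int[OF X monomial_meas] mom by auto

lemma inv_suc_le: "strict_mono r \<Longrightarrow> 1 / real (Suc (r n)) \<le> 1 / real (Suc n)"
  using seq_suble[of r n] by (simp add: frac_le)

theorem mainTheorem8: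
  fixes k :: nat and \<Omega> :: "(real^'d::finite) set" and r :: real
    and z :: "('d \<Rightarrow> nat) \<Rightarrow> real"
  assumes "compact \<Omega>"
    and "r > 0"
    and "{x. \<forall>i. \<bar>x $ i\<bar> \<le> r} \<subseteq> \<Omega>"
  defines "F \<equiv> {\<mu>. signed_measure_on \<Omega> \<mu> \<and>
                  (\<forall>\<alpha>\<in>multi_indices k. signed_integral \<mu> (monomial \<alpha>) = z \<alpha>)}"
  shows "(\<exists>\<mu>\<in>F. \<forall>\<nu>\<in>F. tv_norm \<Omega> \<mu> \<le> tv_norm \<Omega> \<nu>) \<and>
         (\<forall>\<mu>\<in>F. (\<forall>\<nu>\<in>F. tv_norm \<Omega> \<mu> \<le> tv_norm \<Omega> \<nu>) \<longrightarrow>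
             tv_norm \<Omega> \<mu> \<le> exp (2 * real CARD('d) * real k / r) * moment_sup_norm k z)"
proof -
  note cpt = assms(1) and r = assms(2) and cube = assms(3)
  define MI where "MI = (multi_indices k :: ('d \<Rightarrow> nat) set)"
  define N where "N = card MI"
  define E where "E = exp (2 * real CARD('d) * real k / r) * moment_sup_norm k z"
  have inF: "\<mu> \<in> F \<longleftrightarrow> signed_measure_on \<Omega> \<mu> \<and> (\<forall>\<alpha>\<in>MI. signed_integral \<mu> (monomial \<alpha>) = z \<alpha>)" for \<mu>
    unfolding F_def MI_def by simp
  obtain X0 W0 where B: "finite X0" "X0 \<subseteq> \<Omega>" "\<forall>\<beta>\<in>MI. (\<Sum>x\<in>X0. W0 x * monomial \<beta> x) = z \<beta>"
    "(\<Sum>x\<in>X0. \<bar>W0 x\<bar>) \<le> E"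
    using partB[OF r cube, of k z] unfolding MI_def E_def by blast
  define \<mu>0 where "\<mu>0 = sam \<Omega> X0 W0"
  have mu0F: "\<mu>0 \<in> F" unfolding inF \<mu>0_def using sam_in_F[OF B(1,2), of k W0 z] B(3) unfolding MI_def by blast
  have mu0tv: "tv_norm \<Omega> \<mu>0 \<le> E" unfolding \<mu>0_def sam_tv[OF B(1,2)] using B(4) .
  have Fne: "F \<noteq> {}" using mu0F by blast
  define t where "t = Inf (tv_norm \<Omega> ` F)"
  have bdd: "bdd_below (tv_norm \<Omega> ` F)" by (rule bdd_belowI[of _ 0]) (auto simp: tv_nonneg)
  have t_le: "t \<le> tv_norm \<Omega> \<nu>" if "\<nu> \<in> F" for \<nu>
    unfolding t_def using bdd that by (intro cInf_lower) auto
  have p0: "0 \<in> \<Omega>" using cube r by auto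
  have step: "\<exists>Q::nat \<Rightarrow> ((real^'d) \<times> real). (\<forall>i<N. fst (Q i) \<in> \<Omega>) \<and> (\<Sum>i<N. \<bar>snd (Q i)\<bar>) \<le> t + 1 / real (Suc n) \<and>
      (\<forall>\<alpha>\<in>MI. \<bar>z \<alpha> - (\<Sum>i<N. snd (Q i) * monomial \<alpha> (fst (Q i)))\<bar> \<le> 1 / real (Suc n))" for n
  proof -
    have "Inf (tv_norm \<Omega> ` F) < t + 1 / real (Suc n)" unfolding t_def by simp
    then obtain \<mu> where \<mu>: "\<mu> \<in> F" "tv_norm \<Omega> \<mu> < t + 1 / real (Suc n)"
      using cInf_lessD[of "tv_norm \<Omega> ` F"] Fne by blast
    have sm: "signed_measure_on \<Omega> \<mu>" and mz: "\<And>\<alpha>. \<alpha> \<in> MI \<Longrightarrow> signed_integral \<mu> (monomial \<alpha>) = z \<alpha>"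
      using \<mu>(1) unfolding inF by auto
    obtain P C where PC: "\<forall>i<N. P i \<in> \<Omega>" "(\<Sum>i<N. \<bar>C i\<bar>) \<le> tv_norm \<Omega> \<mu>"
      "\<forall>\<alpha>\<in>MI. \<bar>signed_integral \<mu> (monomial \<alpha>) - (\<Sum>i<N. C i * monomial \<alpha> (P i))\<bar> \<le> 1 / real (Suc n)"
      using approx_N[OF sm cpt _ p0, of "1 / real (Suc n)" k] unfolding N_def MI_def by auto
    show ?thesis using PC \<mu>(2) mz by (intro exI[of _ "\<lambda>i. (P i, C i)"]) auto
  qed
  then have "\<forall>n. \<exists>Q::nat \<Rightarrow> ((real^'d) \<times> real). (\<forall>i<N. fst (Q i) \<in> \<Omega>) \<and> (\<Sum>i<N. \<bar>snd (Q i)\<bar>) \<le> t + 1 / real (Suc n) \<and>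
      (\<forall>\<alpha>\<in>MI. \<bar>z \<alpha> - (\<Sum>i<N. snd (Q i) * monomial \<alpha> (fst (Q i)))\<bar> \<le> 1 / real (Suc n))" by blast
  from choice[OF this] obtain QQ :: "nat \<Rightarrow> nat \<Rightarrow> ((real^'d) \<times> real)" where QQall: "\<forall>n. (\<forall>i<N. fst (QQ n i) \<in> \<Omega>) \<and> (\<Sum>i<N. \<bar>snd (QQ n i)\<bar>) \<le> t + 1 / real (Suc n) \<and>
      (\<forall>\<alpha>\<in>MI. \<bar>z \<alpha> - (\<Sum>i<N. snd (QQ n i) * monomial \<alpha> (fst (QQ n i)))\<bar> \<le> 1 / real (Suc n))" by blast
  have QQ: "\<And>n. (\<forall>i<N. fst (QQ n i) \<in> \<Omega>) \<and> (\<Sum>i<N. \<bar>snd (QQ n i)\<bar>) \<le> t + 1 / real (Suc n) \<and>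
      (\<forall>\<alpha>\<in>MI. \<bar>z \<alpha> - (\<Sum>i<N. snd (QQ n i) * monomial \<alpha> (fst (QQ n i)))\<bar> \<le> 1 / real (Suc n))" using QQall by blast
  define B where "B = t + 1"
  define K where "K = \<Omega> \<times> {-B..B}"
  have K: "compact K" unfolding K_def using cpt by (intro compact_Times) auto
  have inK: "QQ n i \<in> K" if "i < N" for n i
  proof -
    have "\<bar>snd (QQ n i)\<bar> \<le> (\<Sum>i<N. \<bar>snd (QQ n i)\<bar>)"
      using that by (intro member_le_sum) auto
    also have "\<dots> \<le> t + 1 / real (Suc n)" using QQ by blast
    also have "\<dots> \<le> B" unfolding B_def by simp
    finally have "snd (QQ n i) \<in> {-B..B}" by auto
    moreover have "fst (QQ n i) \<in> \<Omega>" using QQ that by blast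
    ultimately show ?thesis unfolding K_def by (cases "QQ n i") auto
  qed
  obtain rr l where rl: "strict_mono rr" "\<And>i. i < N \<Longrightarrow> l i \<in> K \<and> (\<lambda>n. QQ (rr n) i) \<longlonglongrightarrow> l i"
    using seq_extract[OF K, of N QQ] inK by blast
  define P where "P i = fst (l i)" for i
  define C where "C i = snd (l i)" for i
  have PO: "P i \<in> \<Omega>" if "i < N" for i using rl(2)[OF that] unfolding P_def K_def by auto
  have Pl: "(\<lambda>n. fst (QQ (rr n) i)) \<longlonglongrightarrow> P i" if "i < N" for i
    unfolding P_def using rl(2)[OF that] by (intro tendsto_fst) auto
  have Cl: "(\<lambda>n. snd (QQ (rr n) i)) \<longlonglongrightarrow> C i" if "i < N" for i
    unfolding C_def using rl(2)[OF that] by (intro tendsto_snd) auto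
  have inv0: "(\<lambda>n. 1 / real (Suc n)) \<longlonglongrightarrow> 0" using LIMSEQ_inverse_real_of_nat by (simp add: divide_inverse)
  have momlim: "(\<Sum>i<N. C i * monomial \<alpha> (P i)) = z \<alpha>" if \<alpha>: "\<alpha> \<in> MI" for \<alpha>
  proof -
    define s where "s n = (\<Sum>i<N. snd (QQ (rr n) i) * monomial \<alpha> (fst (QQ (rr n) i)))" for n
    have cont: "isCont (monomial \<alpha>) x" for x
      using monomial_cont[of \<alpha>] by (simp add: continuous_on_eq_continuous_at)
    have s1: "s \<longlonglongrightarrow> (\<Sum>i<N. C i * monomial \<alpha> (P i))"
      unfolding s_def by (intro tendsto_sum tendsto_mult Cl isCont_tendsto_compose[OF cont] Pl) auto
    have "(\<lambda>n. z \<alpha> - s n) \<longlonglongrightarrow> 0"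
    proof (rule Lim_null_comparison[OF _ inv0])
      show "\<forall>\<^sub>F n in sequentially. norm (z \<alpha> - s n) \<le> 1 / real (Suc n)"
      proof (intro always_eventually allI)
        fix n
        have "\<bar>z \<alpha> - s n\<bar> \<le> 1 / real (Suc (rr n))" unfolding s_def using QQ[of "rr n"] \<alpha> by blast
        also have "\<dots> \<le> 1 / real (Suc n)" by (rule inv_suc_le[OF rl(1)])
        finally show "norm (z \<alpha> - s n) \<le> 1 / real (Suc n)" by simp
      qed
    qed
    then have "(\<lambda>n. z \<alpha> - (z \<alpha> - s n)) \<longlonglongrightarrow> z \<alpha> - 0" by (intro tendsto_diff) auto
    then have s2: "s \<longlonglongrightarrow> z \<alpha>" by simp
    show ?thesis using LIMSEQ_unique[OF s1 s2] .
  qed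
  have tvlim: "(\<Sum>i<N. \<bar>C i\<bar>) \<le> t"
  proof (rule LIMSEQ_le)
    show "(\<lambda>n. \<Sum>i<N. \<bar>snd (QQ (rr n) i)\<bar>) \<longlonglongrightarrow> (\<Sum>i<N. \<bar>C i\<bar>)"
      by (intro tendsto_sum tendsto_rabs Cl) auto
    show "(\<lambda>n. t + 1 / real (Suc n)) \<longlonglongrightarrow> t" using tendsto_add[OF tendsto_const inv0, of t] by simp
    show "\<exists>M. \<forall>n\<ge>M. (\<Sum>i<N. \<bar>snd (QQ (rr n) i)\<bar>) \<le> t + 1 / real (Suc n)"
    proof (intro exI allI impI)
      fix n
      have "(\<Sum>i<N. \<bar>snd (QQ (rr n) i)\<bar>) \<le> t + 1 / real (Suc (rr n))" using QQ by blast
      also have "\<dots> \<le> t + 1 / real (Suc n)" using inv_suc_le[OF rl(1)] by simp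
      finally show "(\<Sum>i<N. \<bar>snd (QQ (rr n) i)\<bar>) \<le> t + 1 / real (Suc n)" .
    qed
  qed
  obtain X W where XW: "finite X" "X \<subseteq> \<Omega>" "\<forall>g. (\<Sum>x\<in>X. W x * g x) = (\<Sum>i\<in>{..<N}. C i * g (P i))"
    "(\<Sum>x\<in>X. \<bar>W x\<bar>) \<le> (\<Sum>i\<in>{..<N}. \<bar>C i\<bar>)"
    using atoms_sam[of "{..<N}" P \<Omega> C] PO by blast
  define \<mu>s where "\<mu>s = sam \<Omega> X W"
  have musF: "\<mu>s \<in> F" unfolding inF \<mu>s_def
    using sam_in_F[OF XW(1,2), of k W z] XW(3) momlim unfolding MI_def by auto
  have mustv: "tv_norm \<Omega> \<mu>s \<le> t" unfolding \<mu>s_def sam_tv[OF XW(1,2)] using XW(4) tvlim by simp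
  have part1: "\<exists>\<mu>\<in>F. \<forall>\<nu>\<in>F. tv_norm \<Omega> \<mu> \<le> tv_norm \<Omega> \<nu>"
    using musF mustv t_le by (meson order.trans)
  have part2: "\<forall>\<mu>\<in>F. (\<forall>\<nu>\<in>F. tv_norm \<Omega> \<mu> \<le> tv_norm \<Omega> \<nu>) \<longrightarrow> tv_norm \<Omega> \<mu> \<le> E"
    using mu0F mu0tv by (meson order.trans)
  show ?thesis using part1 part2 unfolding E_def by blast
qed


end
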